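(* Let $1\le p<\infty$, $\theta,\rho\in(0,1)$, $\Omega\in\mathbb{IR}^{d_0}$ a box with nonempty interior, and $\Phi:\mathbb R^{d_0}\to\mathbb R^{d_{L+1}}$ a feedforward neural network with twice differentiable activation $\sigma$ such that $\sigma,\sigma',\sigma''$ admit interval enclosures $\Sigma,\Sigma',\Sigma''$ that are Hölder continuous on $\mathbb{IR}$. Define $f_{\Phi,2,p}(x)=\sum_{i=1}^{d_{L+1}}\sum_{|\alpha|\le2}|D^\alpha\Phi_i(x)|^p$ and $$F_{\Phi,2,p}(K)=\sum_{i=1}^{d_{L+1}}\Big(|\mathrm{Fval}_{\Phi,L+1,\Sigma}(K)_i|^p+\sum_{j=1}^{d_0}|\mathrm{Jac}_{\Phi,0}(K)_{ij}|^p+\sum_{1\le j\le k\le d_0}|\mathrm{Hess}_{\Phi,i,0}(K)_{jk}|^p\Big).$$ Then $f_{\Phi,2,p}$ is continuous, $F_{\Phi,2,p}$ is a Hölder continuous interval enclosure of $f_{\Phi,2,p}$ on $\Omega$, and AdaQuad with integrand $f_{\Phi,2,p}$, enclosure $F_{\Phi,2,p}$, a positive-weight quadrature rule exact for constants, marking $\mathrm{D\ddot orfler}_\theta$ and refinement $\mathrm{H\ddot older}_\rho$ yields for all $n$ $$\big|\,\|\Phi\|_{W^{2,p}(\Omega;\mathbb R^{d_{L+1}})}-\mathrm Q_n^{1/p}\big|\le\eta_n^{1/p},\qquad\eta_{n+1}\le(1-\theta(1-\rho))\eta_n.$$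
   Context: $\|\Phi\|_{W^{k,p}(\Omega;\mathbb R^m)}=(\sum_{i=1}^m\sum_{|\alpha|\le k}\int_\Omega|D^\alpha\Phi_i|^pdx)^{1/p}$, sum over multi-indices each once. Intervals, boxes, interval arithmetic $X\circ Y=\{x\circ y\}$, interval matrix products via usual formula (left to right), $\odot$ entrywise; width $w$ (max entry width); $|X|=\{|x|:x\in X\}$, $X^\gamma=[\underline X^\gamma,\overline X^\gamma]$ for $\underline X\ge0$. Interval enclosure on $\Omega$: inclusion isotonic $F$ with $\phi(K)\subset F(K)$ for boxes $K\subset\Omega$; Hölder continuous: $w(F(K))\le Cw(K)^\gamma$. Network: weights $W^{(\ell)}$, biases $b^{(\ell)}$, $z^{(\ell)}=W^{(\ell-1)}x^{(\ell-1)}+b^{(\ell-1)}$, $x^{(\ell)}=\sigma(z^{(\ell)})$, $x^{(0)}=u$, $\Phi=z^{(L+1)}$. $\mathrm{Fval}_{\Phi,\ell,\Sigma}(K)$: $X^{(0)}=K$; for $k=0,\dots,\ell-1$: $Z^{(k+1)}=W^{(k)}X^{(k)}+b^{(k)}$, $X^{(k+1)}=\Sigma(Z^{(k+1)})$; return $Z^{(\ell)}$. $\mathrm{Jac}_{\Phi,\ell}(K)$: $J^{(L)}=W^{(L)}$; for $k=L-1,\dots,\ell$: $J^{(k)}=(J^{(k+1)}\mathrm{diag}(\Sigma'(\mathrm{Fval}_{\Phi,k+1,\Sigma}(K))))W^{(k)}$; return $J^{(\ell)}$. $\mathrm{Hess}_{\Phi,i,\ell}(K)$: $H^{(L)}=0$;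 for $k=L-1,\dots,\ell$, with $Z^{(k+1)}=\mathrm{Fval}_{\Phi,k+1,\Sigma}(K)$, $J_i^{(k+1)}$ the $i$-th row of $\mathrm{Jac}_{\Phi,k+1}(K)$: $H^{(k)}=W^{(k)T}\mathrm{diag}(\Sigma'(Z^{(k+1)}))H^{(k+1)}\mathrm{diag}(\Sigma'(Z^{(k+1)}))W^{(k)}+W^{(k)T}\mathrm{diag}(\Sigma''(Z^{(k+1)})\odot J_i^{(k+1)})W^{(k)}$; return $H^{(\ell)}$. AdaQuad: $\mathcal P_0=\{\Omega\}$; with $\eta_K=w(F(K))\mathrm{vol}(K)$, $\mathcal P_{n+1}=(\mathcal P_n\setminus\widetilde{\mathcal P}_n)\cup\bigcup_{K\in\widetilde{\mathcal P}_n}\mathcal R(K)$ with $\widetilde{\mathcal P}_n$ the marked set; $\mathrm Q_n=\sum_{K\in\mathcal P_n}\mathcal I(f,K)$, $\eta_n=\sum_{K\in\mathcal P_n}\eta_K$. Quadrature $\mathcal I(f,K)=\sum_iw_if(x_i)$, $x_i\in K$, $w_i>0$, $\sum w_i=\mathrm{vol}(K)$. $\mathrm{D\ddot orfler}_\theta$: repeatedly mark all unmarked elements of maximal indicator until the marked sum is $\ge\theta$ times the total. $\mathrm{H\ddot older}_\rho(K)$ with a Hölder constant $C$ and exponent $\gamma$ of $F$: if $\eta_K=0$ return $\{K\}$; else split each side $K_i$ (length $l_i$) uniformly into $m_i=\lceil l_i(C\mathrm{vol}(K)/(\rho\eta_K))^{1/\gamma}\rceil$ pieces and return all product boxes. 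*)

theory Defs
  imports "HOL-Analysis.Analysis" "HOL-Library.Interval"
begin

(* Conventions: all indices are 0-based.  Vectors in R^n are functions nat => real,
   only the entries < n being relevant; matrices are nat => nat => _ .
   A box in IR^n is a function nat => real interval (entries < n relevant). *)

type_synonym ivl = "real interval"
type_synonym ibox = "nat \<Rightarrow> real interval"
type_synonym imat = "nat \<Rightarrow> nat \<Rightarrow> real interval"

definition box_pts :: "nat \<Rightarrow> ibox \<Rightarrow> (nat \<Rightarrow> real) set" where
  "box_pts n K = {x. \<forall>j<n. x j \<in> set_of (K j)}"

definition box_sub :: "nat \<Rightarrow> ibox \<Rightarrow> ibox \<Rightarrow> bool" where
  "box_sub n K K' \<longleftrightarrow> (\<forall>j<n. set_of (K j) \<subseteq> set_of (K' j))"

definition box_width :: "nat \<Rightarrow> ibox \<Rightarrow> real" where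
  "box_width n K = (MAX j\<in>{..<n}. width (K j))"

definition box_vol :: "nat \<Rightarrow> ibox \<Rightarrow> real" where
  "box_vol n K = (\<Prod>j<n. width (K j))"

(* X^gamma = [lower X ^gamma, upper X ^gamma] for X >= 0 *)
definition ipowr :: "ivl \<Rightarrow> real \<Rightarrow> ivl" where
  "ipowr X g = Ivl (lower X powr g) (upper X powr g)"

definition imat_mult :: "nat \<Rightarrow> imat \<Rightarrow> imat \<Rightarrow> imat" where
  "imat_mult n A B = (\<lambda>i k. \<Sum>j<n. A i j * B j k)"

definition imat_add :: "imat \<Rightarrow> imat \<Rightarrow> imat" where
  "imat_add A B = (\<lambda>i k. A i k + B i k)"

definition idiag :: "(nat \<Rightarrow> ivl) \<Rightarrow> imat" where
  "idiag v = (\<lambda>i j. if i = j then v i else 0)"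

definition ireal_mat :: "(nat \<Rightarrow> nat \<Rightarrow> real) \<Rightarrow> imat" where
  "ireal_mat A = (\<lambda>i j. interval_of (A i j))"

definition itrans :: "imat \<Rightarrow> imat" where
  "itrans A = (\<lambda>i j. A j i)"

definition ienclosure_R :: "(ivl \<Rightarrow> ivl) \<Rightarrow> (real \<Rightarrow> real) \<Rightarrow> bool" where
  "ienclosure_R S s \<longleftrightarrow>
     (\<forall>X Y. set_of X \<subseteq> set_of Y \<longrightarrow> set_of (S X) \<subseteq> set_of (S Y)) \<and>
     (\<forall>X. s ` set_of X \<subseteq> set_of (S X))"

definition holder_R :: "(ivl \<Rightarrow> ivl) \<Rightarrow> bool" where
  "holder_R S \<longleftrightarrow> (\<exists>C g. 0 \<le> C \<and> 0 < g \<and> (\<forall>X. width (S X) \<le> C * width X powr g))"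

definition enclosure_on :: "nat \<Rightarrow> ibox \<Rightarrow> ((nat \<Rightarrow> real) \<Rightarrow> real) \<Rightarrow> (ibox \<Rightarrow> ivl) \<Rightarrow> bool" where
  "enclosure_on n \<Omega> f F \<longleftrightarrow>
     (\<forall>K K'. box_sub n K K' \<and> box_sub n K' \<Omega> \<longrightarrow> set_of (F K) \<subseteq> set_of (F K')) \<and>
     (\<forall>K. box_sub n K \<Omega> \<longrightarrow> f ` box_pts n K \<subseteq> set_of (F K))"

definition holder_on :: "nat \<Rightarrow> ibox \<Rightarrow> (ibox \<Rightarrow> ivl) \<Rightarrow> real \<Rightarrow> real \<Rightarrow> bool" where
  "holder_on n \<Omega> F C g \<longleftrightarrow> 0 \<le> C \<and> 0 < g \<and>
     (\<forall>K. box_sub n K \<Omega> \<longrightarrow> width (F K) \<le> C * box_width n K powr g)"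

(* widths d k (k = 0..L+1), weights W k (d(k+1) x d k matrix), biases b k *)
primrec nn_x :: "(real \<Rightarrow> real) \<Rightarrow> (nat \<Rightarrow> nat) \<Rightarrow> (nat \<Rightarrow> nat \<Rightarrow> nat \<Rightarrow> real) \<Rightarrow>
    (nat \<Rightarrow> nat \<Rightarrow> real) \<Rightarrow> nat \<Rightarrow> (nat \<Rightarrow> real) \<Rightarrow> (nat \<Rightarrow> real)" where
  "nn_x s d W b 0 u = u"
| "nn_x s d W b (Suc k) u =
     (\<lambda>i. s ((\<Sum>j<d k. W k i j * nn_x s d W b k u j) + b k i))"

(* z^(k+1) = W^(k) x^(k) + b^(k) *)
definition nn_z :: "(real \<Rightarrow> real) \<Rightarrow> (nat \<Rightarrow> nat) \<Rightarrow> (nat \<Rightarrow> nat \<Rightarrow> nat \<Rightarrow> real) \<Rightarrow>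
    (nat \<Rightarrow> nat \<Rightarrow> real) \<Rightarrow> nat \<Rightarrow> (nat \<Rightarrow> real) \<Rightarrow> (nat \<Rightarrow> real)" where
  "nn_z s d W b k u = (\<lambda>i. (\<Sum>j<d k. W k i j * nn_x s d W b k u j) + b k i)"

definition nn :: "(real \<Rightarrow> real) \<Rightarrow> (nat \<Rightarrow> nat) \<Rightarrow> (nat \<Rightarrow> nat \<Rightarrow> nat \<Rightarrow> real) \<Rightarrow>
    (nat \<Rightarrow> nat \<Rightarrow> real) \<Rightarrow> nat \<Rightarrow> (nat \<Rightarrow> real) \<Rightarrow> (nat \<Rightarrow> real)" where
  "nn s d W b L = nn_z s d W b L"

primrec fval_x :: "(ivl \<Rightarrow> ivl) \<Rightarrow> (nat \<Rightarrow> nat) \<Rightarrow> (nat \<Rightarrow> nat \<Rightarrow> nat \<Rightarrow> real) \<Rightarrow>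
    (nat \<Rightarrow> nat \<Rightarrow> real) \<Rightarrow> nat \<Rightarrow> ibox \<Rightarrow> ibox" where
  "fval_x S d W b 0 K = K"
| "fval_x S d W b (Suc k) K =
     (\<lambda>i. S ((\<Sum>j<d k. interval_of (W k i j) * fval_x S d W b k K j) + interval_of (b k i)))"

(* Fval_{Phi,l,Sigma}(K) = Z^(l), for l >= 1 *)
definition Fval :: "(ivl \<Rightarrow> ivl) \<Rightarrow> (nat \<Rightarrow> nat) \<Rightarrow> (nat \<Rightarrow> nat \<Rightarrow> nat \<Rightarrow> real) \<Rightarrow>
    (nat \<Rightarrow> nat \<Rightarrow> real) \<Rightarrow> nat \<Rightarrow> ibox \<Rightarrow> ibox" where
  "Fval S d W b l K = (\<lambda>i. (\<Sum>j<d (l - 1). interval_of (W (l - 1) i j) * fval_x S d W b (l - 1) K j)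
       + interval_of (b (l - 1) i))"

(* jac_steps m K = J^(L-m) *)
primrec jac_steps :: "(ivl \<Rightarrow> ivl) \<Rightarrow> (ivl \<Rightarrow> ivl) \<Rightarrow> (nat \<Rightarrow> nat) \<Rightarrow>
    (nat \<Rightarrow> nat \<Rightarrow> nat \<Rightarrow> real) \<Rightarrow> (nat \<Rightarrow> nat \<Rightarrow> real) \<Rightarrow> nat \<Rightarrow> nat \<Rightarrow> ibox \<Rightarrow> imat" where
  "jac_steps S S1 d W b L 0 K = ireal_mat (W L)"
| "jac_steps S S1 d W b L (Suc m) K =
     (let k = L - Suc m in
      imat_mult (d (k + 1))
        (imat_mult (d (k + 1)) (jac_steps S S1 d W b L m K)
           (idiag (\<lambda>a. S1 (Fval S d W b (k + 1) K a))))
        (ireal_mat (W k)))"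

(* Jac_{Phi,l}(K) for l <= L *)
definition Jac :: "(ivl \<Rightarrow> ivl) \<Rightarrow> (ivl \<Rightarrow> ivl) \<Rightarrow> (nat \<Rightarrow> nat) \<Rightarrow>
    (nat \<Rightarrow> nat \<Rightarrow> nat \<Rightarrow> real) \<Rightarrow> (nat \<Rightarrow> nat \<Rightarrow> real) \<Rightarrow> nat \<Rightarrow> nat \<Rightarrow> ibox \<Rightarrow> imat" where
  "Jac S S1 d W b L l K = jac_steps S S1 d W b L (L - l) K"

(* hess_steps i m K = H^(L-m) for output component i *)
primrec hess_steps :: "(ivl \<Rightarrow> ivl) \<Rightarrow> (ivl \<Rightarrow> ivl) \<Rightarrow> (ivl \<Rightarrow> ivl) \<Rightarrow> (nat \<Rightarrow> nat) \<Rightarrow>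
    (nat \<Rightarrow> nat \<Rightarrow> nat \<Rightarrow> real) \<Rightarrow> (nat \<Rightarrow> nat \<Rightarrow> real) \<Rightarrow> nat \<Rightarrow> nat \<Rightarrow> nat \<Rightarrow> ibox \<Rightarrow> imat" where
  "hess_steps S S1 S2 d W b L i 0 K = (\<lambda>_ _. 0)"
| "hess_steps S S1 S2 d W b L i (Suc m) K =
     (let k = L - Suc m; n = d (k + 1); Z = Fval S d W b (k + 1) K;
          D = idiag (\<lambda>a. S1 (Z a)); Wm = ireal_mat (W k); Wt = itrans Wm;
          Ji = (\<lambda>a. Jac S S1 d W b L (k + 1) K i a)
      in imat_add
          (imat_mult n (imat_mult n (imat_mult n (imat_mult n Wt D) (hess_steps S S1 S2 d W b L i m K)) D) Wm)
          (imat_mult n (imat_mult n Wt (idiag (\<lambda>a. S2 (Z a) * Ji a))) Wm))"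

(* Hess_{Phi,i,l}(K) for l <= L *)
definition Hess :: "(ivl \<Rightarrow> ivl) \<Rightarrow> (ivl \<Rightarrow> ivl) \<Rightarrow> (ivl \<Rightarrow> ivl) \<Rightarrow> (nat \<Rightarrow> nat) \<Rightarrow>
    (nat \<Rightarrow> nat \<Rightarrow> nat \<Rightarrow> real) \<Rightarrow> (nat \<Rightarrow> nat \<Rightarrow> real) \<Rightarrow> nat \<Rightarrow> nat \<Rightarrow> nat \<Rightarrow> ibox \<Rightarrow> imat" where
  "Hess S S1 S2 d W b L i l K = hess_steps S S1 S2 d W b L i (L - l) K"

definition F_enc :: "(ivl \<Rightarrow> ivl) \<Rightarrow> (ivl \<Rightarrow> ivl) \<Rightarrow> (ivl \<Rightarrow> ivl) \<Rightarrow> (nat \<Rightarrow> nat) \<Rightarrow>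
    (nat \<Rightarrow> nat \<Rightarrow> nat \<Rightarrow> real) \<Rightarrow> (nat \<Rightarrow> nat \<Rightarrow> real) \<Rightarrow> nat \<Rightarrow> real \<Rightarrow> ibox \<Rightarrow> ivl" where
  "F_enc S S1 S2 d W b L p K =
     (\<Sum>i<d (L + 1).
        ipowr (abs_interval (Fval S d W b (L + 1) K i)) p
      + (\<Sum>j<d 0. ipowr (abs_interval (Jac S S1 d W b L 0 K i j)) p)
      + (\<Sum>(j, k)\<in>{(j, k). j \<le> k \<and> k < d 0}. ipowr (abs_interval (Hess S S1 S2 d W b L i 0 K j k)) p))"

definition partial :: "nat \<Rightarrow> ((nat \<Rightarrow> real) \<Rightarrow> real) \<Rightarrow> ((nat \<Rightarrow> real) \<Rightarrow> real)" where
  "partial j g = (\<lambda>x. deriv (\<lambda>t. g (x(j := t))) (x j))"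

definition multiidx :: "nat \<Rightarrow> nat \<Rightarrow> (nat \<Rightarrow> nat) set" where
  "multiidx n k = {\<alpha>. (\<forall>j\<ge>n. \<alpha> j = 0) \<and> (\<Sum>j<n. \<alpha> j) \<le> k}"

definition Dalpha :: "nat \<Rightarrow> (nat \<Rightarrow> nat) \<Rightarrow> ((nat \<Rightarrow> real) \<Rightarrow> real) \<Rightarrow> ((nat \<Rightarrow> real) \<Rightarrow> real)" where
  "Dalpha n \<alpha> g = fold (\<lambda>j h. (partial j ^^ \<alpha> j) h) [0..<n] g"

definition lebesgue_n :: "nat \<Rightarrow> (nat \<Rightarrow> real) measure" where
  "lebesgue_n n = PiM {..<n} (\<lambda>_. lborel)"

definition sobolev_norm :: "nat \<Rightarrow> nat \<Rightarrow> real \<Rightarrow> nat \<Rightarrow> ibox \<Rightarrow> ((nat \<Rightarrow> real) \<Rightarrow> (nat \<Rightarrow> real)) \<Rightarrow> real" where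
  "sobolev_norm n k p m \<Omega> \<Phi> =
     (\<Sum>i<m. \<Sum>\<alpha>\<in>multiidx n k.
        integral\<^sup>L (lebesgue_n n)
          (\<lambda>x. indicator (box_pts n \<Omega>) x * \<bar>Dalpha n \<alpha> (\<lambda>u. \<Phi> u i) x\<bar> powr p)) powr (1 / p)"

definition f_sob :: "nat \<Rightarrow> nat \<Rightarrow> real \<Rightarrow> nat \<Rightarrow> ((nat \<Rightarrow> real) \<Rightarrow> (nat \<Rightarrow> real)) \<Rightarrow> (nat \<Rightarrow> real) \<Rightarrow> real" where
  "f_sob n k p m \<Phi> x = (\<Sum>i<m. \<Sum>\<alpha>\<in>multiidx n k. \<bar>Dalpha n \<alpha> (\<lambda>u. \<Phi> u i) x\<bar> powr p)"

(* quadrature rule: for each box a list of (weight, node) *)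
definition is_quad_rule :: "nat \<Rightarrow> ibox \<Rightarrow> (ibox \<Rightarrow> (real \<times> (nat \<Rightarrow> real)) list) \<Rightarrow> bool" where
  "is_quad_rule n \<Omega> Q \<longleftrightarrow> (\<forall>K. box_sub n K \<Omega> \<longrightarrow>
     (\<forall>(w, x)\<in>set (Q K). 0 < w \<and> x \<in> box_pts n K) \<and> (\<Sum>(w, x)\<leftarrow>Q K. w) = box_vol n K)"

definition quad :: "(ibox \<Rightarrow> (real \<times> (nat \<Rightarrow> real)) list) \<Rightarrow> ((nat \<Rightarrow> real) \<Rightarrow> real) \<Rightarrow> ibox \<Rightarrow> real" where
  "quad Q f K = (\<Sum>(w, x)\<leftarrow>Q K. w * f x)"

definition eta :: "nat \<Rightarrow> (ibox \<Rightarrow> ivl) \<Rightarrow> ibox \<Rightarrow> real" where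
  "eta n F K = width (F K) * box_vol n K"

definition dorfler_step :: "('b \<Rightarrow> real) \<Rightarrow> 'b set \<Rightarrow> 'b set \<Rightarrow> 'b set" where
  "dorfler_step \<eta> P M = M \<union> {K \<in> P - M. \<eta> K = Max (\<eta> ` (P - M))}"

definition dorfler :: "real \<Rightarrow> ('b \<Rightarrow> real) \<Rightarrow> 'b set \<Rightarrow> 'b set" where
  "dorfler \<theta> \<eta> P = (dorfler_step \<eta> P ^^
      (LEAST k. \<theta> * sum \<eta> P \<le> sum \<eta> ((dorfler_step \<eta> P ^^ k) {}))) {}"

definition holder_refine :: "nat \<Rightarrow> real \<Rightarrow> real \<Rightarrow> real \<Rightarrow> (ibox \<Rightarrow> real) \<Rightarrow> ibox \<Rightarrow> ibox set" where
  "holder_refine n C g \<rho> \<eta> K =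
     (if \<eta> K = 0 then {K}
      else let m = (\<lambda>i. nat \<lceil>width (K i) * (C * box_vol n K / (\<rho> * \<eta> K)) powr (1 / g)\<rceil>)
           in (\<lambda>t. \<lambda>i. if i < n
                       then Ivl (lower (K i) + real (t i) * width (K i) / real (m i))
                                (lower (K i) + real (t i + 1) * width (K i) / real (m i))
                       else K i) ` (PiE {..<n} (\<lambda>i. {..<m i})))"

primrec adaquad_part :: "(ibox set \<Rightarrow> ibox set) \<Rightarrow> (ibox \<Rightarrow> ibox set) \<Rightarrow> ibox \<Rightarrow> nat \<Rightarrow> ibox set" where
  "adaquad_part mark R \<Omega> 0 = {\<Omega>}"
| "adaquad_part mark R \<Omega> (Suc k) =
     (let P = adaquad_part mark R \<Omega> k; M = mark P in (P - M) \<union> (\<Union>K\<in>M. R K))"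

end

theory Submission
  imports Defs
begin


lemma lower_sum_ivl: "lower (\<Sum>i\<in>A. (X i :: real interval)) = (\<Sum>i\<in>A. lower (X i))"
  by (induction A rule: infinite_finite_induct) auto

lemma upper_sum_ivl: "upper (\<Sum>i\<in>A. (X i :: real interval)) = (\<Sum>i\<in>A. upper (X i))"
  by (induction A rule: infinite_finite_induct) auto

lemma width_sum_ivl: "width (\<Sum>i\<in>A. (X i :: real interval)) = (\<Sum>i\<in>A. width (X i))"
  by (simp add: width_def lower_sum_ivl upper_sum_ivl sum_subtractf)

lemma width_plus_ivl: "width (X + Y :: real interval) = width X + width Y"
  by (simp add: width_def)

lemma width_nonneg[simp]: "0 \<le> width (X :: real interval)"
  by (simp add: width_def)

lemma sum_in_ivl:
  assumes "\<And>i. i \<in> A \<Longrightarrow> x i \<in> set_of (X i :: real interval)"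
  shows "(\<Sum>i\<in>A. x i) \<in> set_of (\<Sum>i\<in>A. X i)"
  using assms by (auto simp: set_of_eq lower_sum_ivl upper_sum_ivl intro!: sum_mono)

lemma sum_sub_ivl:
  assumes "\<And>i. i \<in> A \<Longrightarrow> set_of (X i) \<subseteq> set_of (Y i :: real interval)"
  shows "set_of (\<Sum>i\<in>A. X i) \<subseteq> set_of (\<Sum>i\<in>A. Y i)"
proof -
  have "lower (Y i) \<le> lower (X i) \<and> upper (X i) \<le> upper (Y i)" if "i \<in> A" for i
    using assms[OF that] by (auto simp: set_of_eq)
  then show ?thesis by (auto simp: set_of_eq lower_sum_ivl upper_sum_ivl intro!: sum_mono)
qed

lemma plus_in_ivl: "x \<in> set_of X \<Longrightarrow> y \<in> set_of Y \<Longrightarrow> x + y \<in> set_of (X + Y :: real interval)"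
  by (auto simp: set_of_eq)

lemma times_in_ivl: "x \<in> set_of X \<Longrightarrow> y \<in> set_of Y \<Longrightarrow> x * y \<in> set_of (X * Y :: real interval)"
  using times_in_intervalI by auto

lemma plus_sub_ivl: "set_of X \<subseteq> set_of X' \<Longrightarrow> set_of Y \<subseteq> set_of Y' \<Longrightarrow> set_of (X + Y) \<subseteq> set_of (X' + Y' :: real interval)"
  by (rule set_of_add_inc)

lemma times_sub_ivl: "set_of X \<subseteq> set_of X' \<Longrightarrow> set_of Y \<subseteq> set_of Y' \<Longrightarrow> set_of (X * Y) \<subseteq> set_of (X' * Y' :: real interval)"
  by (rule set_of_mul_inc)

definition mag :: "real interval \<Rightarrow> real" where "mag X = max \<bar>lower X\<bar> \<bar>upper X\<bar>"

lemma mag_ge: "x \<in> set_of X \<Longrightarrow> \<bar>x\<bar> \<le> mag X"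
  by (auto simp: mag_def set_of_eq)

lemma mag_nonneg: "0 \<le> mag X" by (auto simp: mag_def)

lemma mag_mono: "set_of X \<subseteq> set_of Y \<Longrightarrow> mag X \<le> mag Y"
proof -
  assume "set_of X \<subseteq> set_of Y"
  then have "lower Y \<le> lower X" "upper X \<le> upper Y" using lower_le_upper[of X]
    by (auto simp: set_of_eq)
  then show ?thesis using lower_le_upper[of X] lower_le_upper[of Y] unfolding mag_def by linarith
qed

lemma lower_in[simp]: "lower X \<in> set_of X" and upper_in[simp]: "upper X \<in> set_of X"
  by (auto simp: set_of_eq)

lemma width_times_ivl: "width (X * Y :: real interval) \<le> mag X * width Y + mag Y * width X"
proof -
  have "upper (X*Y) \<in> set_of (X*Y)" by simp
  then obtain x1 y1 where 1: "upper (X*Y) = x1*y1" "x1 \<in> set_of X" "y1 \<in> set_of Y"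
    unfolding set_of_times by auto
  have "lower (X*Y) \<in> set_of (X*Y)" by simp
  then obtain x2 y2 where 2: "lower (X*Y) = x2*y2" "x2 \<in> set_of X" "y2 \<in> set_of Y"
    unfolding set_of_times by auto
  have "x1*y1 - x2*y2 = x1*(y1-y2) + y2*(x1-x2)" by (simp add: algebra_simps)
  also have "\<dots> \<le> \<bar>x1\<bar>*\<bar>y1-y2\<bar> + \<bar>y2\<bar>*\<bar>x1-x2\<bar>"
    by (metis abs_ge_self abs_mult add_mono)
  also have "\<dots> \<le> mag X * width Y + mag Y * width X"
  proof (rule add_mono; rule mult_mono)
    show "\<bar>x1\<bar> \<le> mag X" "\<bar>y2\<bar> \<le> mag Y" using 1 2 by (auto intro: mag_ge)
    show "\<bar>y1 - y2\<bar> \<le> width Y" "\<bar>x1 - x2\<bar> \<le> width X" using 1 2 by (auto simp: width_def set_of_eq)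
  qed (auto simp: mag_nonneg)
  finally show ?thesis using 1 2 by (simp add: width_def)
qed

lemma width_abs_ivl: "width (abs_interval X) \<le> width (X :: real interval)"
proof -
  have "lower X \<le> upper X" by simp
  then show ?thesis by (auto simp del: lower_le_upper simp: width_def abs_if min_def max_def)
qed

lemma lower_abs_nonneg: "0 \<le> lower (abs_interval (X :: real interval))"
proof -
  have "lower X \<le> upper X" by simp
  then show ?thesis by (simp add: min_def)
qed

lemma abs_in_ivl: "x \<in> set_of X \<Longrightarrow> \<bar>x\<bar> \<in> set_of (abs_interval (X :: real interval))"
  by (simp add: set_of_abs_interval)

lemma abs_sub_ivl: "set_of X \<subseteq> set_of Y \<Longrightarrow> set_of (abs_interval X) \<subseteq> set_of (abs_interval (Y :: real interval))"
  by (auto simp: set_of_abs_interval)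

lemma mag_abs: "mag (abs_interval X) = mag X"
proof -
  have "0 \<le> lower (abs_interval X)" by (rule lower_abs_nonneg)
  moreover have "lower (abs_interval X) \<le> upper (abs_interval X)" by (rule lower_le_upper)
  ultimately have "mag (abs_interval X) = upper (abs_interval X)" unfolding mag_def
    by (simp del: lower_abs_interval upper_abs_interval lower_le_upper)
  then show ?thesis unfolding mag_def[of X] upper_abs_interval .
qed

lemma Ivl_simps'[simp]: "lower (Ivl a b) = min a (b::real)" "upper (Ivl a b) = b"
  by (simp_all add: lower.rep_eq upper.rep_eq Ivl.rep_eq)

lemma Ivl_lower_upper: "a \<le> b \<Longrightarrow> lower (Ivl a b) = a \<and> upper (Ivl a b) = (b::real)"
  by simp

lemma ipowr_lower_upper:
  assumes "0 \<le> lower X" "0 \<le> p"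
  shows "lower (ipowr X p) = lower X powr p" "upper (ipowr X p) = upper X powr p"
proof -
  have "lower X powr p \<le> upper X powr p"
    using assms lower_le_upper[of X] by (intro powr_mono2) auto
  then show "lower (ipowr X p) = lower X powr p" "upper (ipowr X p) = upper X powr p"
    unfolding ipowr_def using Ivl_lower_upper by auto
qed

lemma powr_lip:
  fixes a b p :: real
  assumes "0 \<le> a" "a \<le> b" "1 \<le> p"
  shows "b powr p - a powr p \<le> p * b powr (p - 1) * (b - a)"
proof (cases "a = b")
  case True then show ?thesis by simp
next
  case False
  then have ab: "a < b" using assms by simp
  have cont: "continuous_on {a..b} (\<lambda>x. x powr p)"
    using assms by (intro continuous_on_powr') (auto intro: continuous_intros)
  have "(\<lambda>x. x powr p) differentiable (at x)" if "a < x" "x < b" for x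
    using has_real_derivative_powr[of x p] that assms real_differentiable_def by fastforce
  from MVT[OF ab cont this] obtain l z where z: "a < z" "z < b"
    "DERIV (\<lambda>x. x powr p) z :> l" "b powr p - a powr p = (b - a) * l" by blast
  have "l = p * z powr (p - 1)"
    using DERIV_unique[OF z(3) has_real_derivative_powr[of z p]] z assms by simp
  moreover have "z powr (p - 1) \<le> b powr (p - 1)"
    using z assms by (intro powr_mono2) auto
  ultimately have "l \<le> p * b powr (p - 1)" using assms by simp
  then show ?thesis using z ab by (simp add: mult.commute mult_left_mono)
qed

lemma width_ipowr_abs:
  fixes X :: "real interval"
  assumes "1 \<le> p"
  shows "width (ipowr (abs_interval X) p) \<le> p * mag X powr (p - 1) * width X"
proof -
  let ?A = "abs_interval X"
  have l0: "0 \<le> lower ?A" by (rule lower_abs_nonneg)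
  have "width (ipowr ?A p) = upper ?A powr p - lower ?A powr p"
    using ipowr_lower_upper[OF l0, of p] assms by (simp add: width_def)
  also have "\<dots> \<le> p * upper ?A powr (p - 1) * (upper ?A - lower ?A)"
    using powr_lip[OF l0 lower_le_upper assms] .
  finally have 1: "width (ipowr ?A p) \<le> p * upper ?A powr (p - 1) * (upper ?A - lower ?A)" .
  have 2: "upper ?A = mag X" by (simp add: mag_def)
  have 3: "upper ?A - lower ?A \<le> width X" using width_abs_ivl[of X] by (simp add: width_def)
  have 4: "0 \<le> p * mag X powr (p - 1)" using assms by simp
  show ?thesis using 1 mult_left_mono[OF 3 4] unfolding 2 by linarith
qed

lemma ipowr_in: "x \<in> set_of X \<Longrightarrow> 0 \<le> lower X \<Longrightarrow> 0 \<le> p \<Longrightarrow> x powr p \<in> set_of (ipowr X p)"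
  using ipowr_lower_upper[of X p] by (auto simp: set_of_eq intro: powr_mono2)

lemma ipowr_sub: "set_of X \<subseteq> set_of Y \<Longrightarrow> 0 \<le> lower X \<Longrightarrow> 0 \<le> lower Y \<Longrightarrow> 0 \<le> p
   \<Longrightarrow> set_of (ipowr X p) \<subseteq> set_of (ipowr Y p)"
proof -
  assume a: "set_of X \<subseteq> set_of Y" "0 \<le> lower X" "0 \<le> lower Y" "0 \<le> p"
  then have "lower Y \<le> lower X" "upper X \<le> upper Y" using lower_le_upper[of X] by (auto simp: set_of_eq)
  moreover have "0 \<le> upper X" using a(2) lower_le_upper[of X] by linarith
  ultimately have "lower Y powr p \<le> lower X powr p" "upper X powr p \<le> upper Y powr p"
    using a by (auto intro!: powr_mono2)
  then show ?thesis using ipowr_lower_upper[of X p] ipowr_lower_upper[of Y p] a by (auto simp: set_of_eq)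
qed

section \<open>Hoelder-good interval functions\<close>

lemma width_le_bw: "j < n \<Longrightarrow> width (K j) \<le> box_width n K"
  unfolding box_width_def by (rule Max_ge) auto

lemma bw_nonneg: "0 < n \<Longrightarrow> 0 \<le> box_width n K"
  using width_le_bw[of 0 n K] width_nonneg[of "K 0"] by linarith

lemma width_mono_ivl: "set_of X \<subseteq> set_of Y \<Longrightarrow> width X \<le> width (Y :: real interval)"
  using lower_le_upper[of X] by (auto simp: set_of_eq width_def)

lemma bw_mono: "0 < n \<Longrightarrow> box_sub n K K' \<Longrightarrow> box_width n K \<le> box_width n K'"
proof -
  assume n: "0 < n" and K: "box_sub n K K'"
  have "width (K j) \<le> box_width n K'" if "j < n" for j
    using width_mono_ivl[of "K j" "K' j"] K that width_le_bw[OF that, of K'] by (auto simp: box_sub_def)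
  then show ?thesis unfolding box_width_def[of n K] using n by (intro Max.boundedI) auto
qed

lemma powr_lower_exp:
  fixes w B e e' :: real
  assumes "0 \<le> w" "w \<le> B" "0 < e'" "e' \<le> e"
  shows "w powr e \<le> B powr (e - e') * w powr e'"
proof (cases "w = 0")
  case True then show ?thesis using assms by simp
next
  case False
  have "w powr e = w powr (e - e') * w powr e'" by (simp add: powr_add[symmetric])
  also have "\<dots> \<le> B powr (e - e') * w powr e'"
    using assms False by (intro mult_right_mono powr_mono2) auto
  finally show ?thesis .
qed

definition good :: "nat \<Rightarrow> ibox \<Rightarrow> (ibox \<Rightarrow> ivl) \<Rightarrow> bool" where
  "good n \<Omega> G \<longleftrightarrow> (\<forall>K K'. box_sub n K K' \<and> box_sub n K' \<Omega> \<longrightarrow> set_of (G K) \<subseteq> set_of (G K')) \<and>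
     (\<exists>C e. 0 \<le> C \<and> 0 < e \<and> (\<forall>K. box_sub n K \<Omega> \<longrightarrow> width (G K) \<le> C * box_width n K powr e))"

lemma box_sub_refl[simp]: "box_sub n K K" by (simp add: box_sub_def)

lemma good_iso: "good n \<Omega> G \<Longrightarrow> box_sub n K \<Omega> \<Longrightarrow> set_of (G K) \<subseteq> set_of (G \<Omega>)"
  unfolding good_def by auto

lemma good_mag: "good n \<Omega> G \<Longrightarrow> box_sub n K \<Omega> \<Longrightarrow> mag (G K) \<le> mag (G \<Omega>)"
  by (rule mag_mono[OF good_iso])

lemma good_lower:
  assumes "0 < n" "0 < e'" "e' \<le> e" "0 \<le> C"
    and "\<forall>K. box_sub n K \<Omega> \<longrightarrow> width (G K) \<le> C * box_width n K powr e"
  shows "\<forall>K. box_sub n K \<Omega> \<longrightarrow> width (G K) \<le> (C * box_width n \<Omega> powr (e - e')) * box_width n K powr e'"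
proof (intro allI impI)
  fix K assume K: "box_sub n K \<Omega>"
  have "width (G K) \<le> C * box_width n K powr e" using assms K by auto
  also have "\<dots> \<le> C * (box_width n \<Omega> powr (e - e') * box_width n K powr e')"
    using assms bw_nonneg[OF assms(1)] bw_mono[OF assms(1) K]
    by (intro mult_left_mono powr_lower_exp) auto
  finally show "width (G K) \<le> (C * box_width n \<Omega> powr (e - e')) * box_width n K powr e'"
    by (simp add: mult.assoc)
qed

lemma good_const: "good n \<Omega> (\<lambda>K. interval_of c)"
  unfolding good_def by (auto simp: width_def intro!: exI[of _ 0] exI[of _ 1])

lemma good_zero: "good n \<Omega> (\<lambda>K. 0)"
  unfolding good_def by (auto simp: width_def intro!: exI[of _ 0] exI[of _ 1])

lemma good_coord: "j < n \<Longrightarrow> good n \<Omega> (\<lambda>K. K j)"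
proof -
  assume j: "j < n"
  have "\<forall>K. box_sub n K \<Omega> \<longrightarrow> width (K j) \<le> 1 * box_width n K powr 1"
    using j bw_nonneg[of n] width_le_bw[OF j] by auto
  moreover have "\<forall>K K'. box_sub n K K' \<and> box_sub n K' \<Omega> \<longrightarrow> set_of (K j) \<subseteq> set_of (K' j)"
    using j by (auto simp: box_sub_def)
  ultimately show ?thesis unfolding good_def by (meson zero_le_one zero_less_one)
qed

lemma good_add:
  assumes "0 < n" "good n \<Omega> G" "good n \<Omega> H"
  shows "good n \<Omega> (\<lambda>K. G K + H K)"
proof -
  obtain C1 e1 where 1: "0 \<le> C1" "0 < e1" "\<forall>K. box_sub n K \<Omega> \<longrightarrow> width (G K) \<le> C1 * box_width n K powr e1"
    using assms(2) unfolding good_def by blast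
  obtain C2 e2 where 2: "0 \<le> C2" "0 < e2" "\<forall>K. box_sub n K \<Omega> \<longrightarrow> width (H K) \<le> C2 * box_width n K powr e2"
    using assms(3) unfolding good_def by blast
  define e where "e = min e1 e2"
  note A = good_lower[OF assms(1) _ _ 1(1) 1(3), of e] good_lower[OF assms(1) _ _ 2(1) 2(3), of e]
  have "\<forall>K. box_sub n K \<Omega> \<longrightarrow> width (G K + H K) \<le>
     (C1 * box_width n \<Omega> powr (e1 - e) + C2 * box_width n \<Omega> powr (e2 - e)) * box_width n K powr e"
    using A 1 2 unfolding e_def by (auto simp: width_plus_ivl distrib_right intro: add_mono)
  moreover have "0 \<le> C1 * box_width n \<Omega> powr (e1 - e) + C2 * box_width n \<Omega> powr (e2 - e)"
    using 1 2 by auto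
  moreover have "0 < e" using 1 2 by (simp add: e_def)
  moreover have "\<forall>K K'. box_sub n K K' \<and> box_sub n K' \<Omega> \<longrightarrow> set_of (G K + H K) \<subseteq> set_of (G K' + H K')"
  proof (intro allI impI)
    fix K K' assume "box_sub n K K' \<and> box_sub n K' \<Omega>"
    then have "set_of (G K) \<subseteq> set_of (G K')" "set_of (H K) \<subseteq> set_of (H K')"
      using assms(2,3) unfolding good_def by auto
    then show "set_of (G K + H K) \<subseteq> set_of (G K' + H K')" by (rule plus_sub_ivl)
  qed
  ultimately show ?thesis unfolding good_def by blast
qed

lemma good_mult:
  assumes "0 < n" "good n \<Omega> G" "good n \<Omega> H"
  shows "good n \<Omega> (\<lambda>K. G K * H K)"
proof -
  obtain C1 e1 where 1: "0 \<le> C1" "0 < e1" "\<forall>K. box_sub n K \<Omega> \<longrightarrow> width (G K) \<le> C1 * box_width n K powr e1"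
    using assms(2) unfolding good_def by blast
  obtain C2 e2 where 2: "0 \<le> C2" "0 < e2" "\<forall>K. box_sub n K \<Omega> \<longrightarrow> width (H K) \<le> C2 * box_width n K powr e2"
    using assms(3) unfolding good_def by blast
  define e where "e = min e1 e2"
  define MG where "MG = mag (G \<Omega>)"
  define MH where "MH = mag (H \<Omega>)"
  note A = good_lower[OF assms(1) _ _ 1(1) 1(3), of e] good_lower[OF assms(1) _ _ 2(1) 2(3), of e]
  have "\<forall>K. box_sub n K \<Omega> \<longrightarrow> width (G K * H K) \<le>
     (MG * (C2 * box_width n \<Omega> powr (e2 - e)) + MH * (C1 * box_width n \<Omega> powr (e1 - e))) * box_width n K powr e"
  proof (intro allI impI)
    fix K assume K: "box_sub n K \<Omega>"
    have "width (G K * H K) \<le> mag (G K) * width (H K) + mag (H K) * width (G K)"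
      by (rule width_times_ivl)
    also have "\<dots> \<le> MG * ((C2 * box_width n \<Omega> powr (e2 - e)) * box_width n K powr e)
        + MH * ((C1 * box_width n \<Omega> powr (e1 - e)) * box_width n K powr e)"
      using A K 1 2 good_mag[OF assms(2) K] good_mag[OF assms(3) K] unfolding MG_def MH_def e_def
      by (intro add_mono mult_mono) (auto simp: mag_nonneg)
    finally show "width (G K * H K) \<le> (MG * (C2 * box_width n \<Omega> powr (e2 - e)) + MH * (C1 * box_width n \<Omega> powr (e1 - e))) * box_width n K powr e"
      by (simp add: algebra_simps)
  qed
  moreover have "0 \<le> MG * (C2 * box_width n \<Omega> powr (e2 - e)) + MH * (C1 * box_width n \<Omega> powr (e1 - e))"
    using 1 2 by (auto simp: MG_def MH_def mag_nonneg)
  moreover have "0 < e" using 1 2 by (simp add: e_def)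
  moreover have "\<forall>K K'. box_sub n K K' \<and> box_sub n K' \<Omega> \<longrightarrow> set_of (G K * H K) \<subseteq> set_of (G K' * H K')"
  proof (intro allI impI)
    fix K K' assume "box_sub n K K' \<and> box_sub n K' \<Omega>"
    then have "set_of (G K) \<subseteq> set_of (G K')" "set_of (H K) \<subseteq> set_of (H K')"
      using assms(2,3) unfolding good_def by auto
    then show "set_of (G K * H K) \<subseteq> set_of (G K' * H K')" by (rule times_sub_ivl)
  qed
  ultimately show ?thesis unfolding good_def by blast
qed

lemma good_sum:
  assumes "0 < n" "finite A" "\<And>i. i \<in> A \<Longrightarrow> good n \<Omega> (G i)"
  shows "good n \<Omega> (\<lambda>K. \<Sum>i\<in>A. G i K)"
  using assms(2,3)
proof (induction A rule: finite_induct)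
  case empty then show ?case using good_zero by simp
next
  case (insert x F)
  then show ?case using good_add[OF assms(1), where G="G x" and H="\<lambda>K. \<Sum>i\<in>F. G i K"] by simp
qed

lemma good_S:
  assumes "ienclosure_R S s" "holder_R S" "good n \<Omega> G"
  shows "good n \<Omega> (\<lambda>K. S (G K))"
proof -
  obtain C1 e1 where 1: "0 \<le> C1" "0 < e1" "\<forall>K. box_sub n K \<Omega> \<longrightarrow> width (G K) \<le> C1 * box_width n K powr e1"
    using assms(3) unfolding good_def by blast
  obtain Cs es where s: "0 \<le> Cs" "0 < es" "\<forall>X. width (S X) \<le> Cs * width X powr es"
    using assms(2) unfolding holder_R_def by blast
  have "\<forall>K. box_sub n K \<Omega> \<longrightarrow> width (S (G K)) \<le> (Cs * C1 powr es) * box_width n K powr (e1 * es)"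
  proof (intro allI impI)
    fix K assume K: "box_sub n K \<Omega>"
    have "width (S (G K)) \<le> Cs * width (G K) powr es" using s by auto
    also have "\<dots> \<le> Cs * (C1 * box_width n K powr e1) powr es"
      using 1 K s by (intro mult_left_mono powr_mono2) auto
    also have "\<dots> = (Cs * C1 powr es) * box_width n K powr (e1 * es)"
      using 1 by (simp add: powr_mult powr_powr)
    finally show "width (S (G K)) \<le> (Cs * C1 powr es) * box_width n K powr (e1 * es)" .
  qed
  moreover have "\<forall>K K'. box_sub n K K' \<and> box_sub n K' \<Omega> \<longrightarrow> set_of (S (G K)) \<subseteq> set_of (S (G K'))"
    using assms(1,3) unfolding good_def ienclosure_R_def by blast
  moreover have "0 \<le> Cs * C1 powr es" "0 < e1 * es" using 1 s by auto
  ultimately show ?thesis unfolding good_def by blast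
qed

lemma good_ipowr:
  assumes "1 \<le> p" "good n \<Omega> G"
  shows "good n \<Omega> (\<lambda>K. ipowr (abs_interval (G K)) p)"
proof -
  obtain C1 e1 where 1: "0 \<le> C1" "0 < e1" "\<forall>K. box_sub n K \<Omega> \<longrightarrow> width (G K) \<le> C1 * box_width n K powr e1"
    using assms(2) unfolding good_def by blast
  define M where "M = p * mag (G \<Omega>) powr (p - 1)"
  have M0: "0 \<le> M" using assms by (simp add: M_def)
  have "\<forall>K. box_sub n K \<Omega> \<longrightarrow> width (ipowr (abs_interval (G K)) p) \<le> (M * C1) * box_width n K powr e1"
  proof (intro allI impI)
    fix K assume K: "box_sub n K \<Omega>"
    have "width (ipowr (abs_interval (G K)) p) \<le> p * mag (G K) powr (p - 1) * width (G K)"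
      by (rule width_ipowr_abs[OF assms(1)])
    also have "\<dots> \<le> M * (C1 * box_width n K powr e1)"
      unfolding M_def using 1 K assms good_mag[OF assms(2) K]
      by (intro mult_mono powr_mono2 mult_left_mono) (auto simp: mag_nonneg)
    finally show "width (ipowr (abs_interval (G K)) p) \<le> (M * C1) * box_width n K powr e1" by (simp add: mult.assoc)
  qed
  moreover have "\<forall>K K'. box_sub n K K' \<and> box_sub n K' \<Omega> \<longrightarrow>
     set_of (ipowr (abs_interval (G K)) p) \<subseteq> set_of (ipowr (abs_interval (G K')) p)"
  proof (intro allI impI)
    fix K K' assume "box_sub n K K' \<and> box_sub n K' \<Omega>"
    then have "set_of (G K) \<subseteq> set_of (G K')"
      using assms(2) unfolding good_def by auto
    then show "set_of (ipowr (abs_interval (G K)) p) \<subseteq> set_of (ipowr (abs_interval (G K')) p)"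
      using assms(1) by (intro ipowr_sub abs_sub_ivl lower_abs_nonneg) auto
  qed
  moreover have "0 \<le> M * C1" using 1 M0 by auto
  ultimately show ?thesis unfolding good_def using 1 by blast
qed


lemma imat_mult_diag: "a < n \<Longrightarrow> imat_mult n A (idiag v) i a = A i a * v a"
proof -
  assume a: "a < n"
  have "imat_mult n A (idiag v) i a = (\<Sum>j<n. if j = a then A i a * v a else 0)"
    unfolding imat_mult_def idiag_def by (intro sum.cong) auto
  also have "\<dots> = A i a * v a" using a by simp
  finally show ?thesis .
qed

locale nnet =
  fixes s s1 s2 :: "real \<Rightarrow> real" and d :: "nat \<Rightarrow> nat"
    and W :: "nat \<Rightarrow> nat \<Rightarrow> nat \<Rightarrow> real" and b :: "nat \<Rightarrow> nat \<Rightarrow> real" and L :: nat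
begin

lemma nn_x_Suc: "nn_x s d W b (Suc k) u a = s (nn_z s d W b k u a)"
  by (simp add: nn_z_def)

primrec dX :: "nat \<Rightarrow> nat \<Rightarrow> (nat \<Rightarrow> real) \<Rightarrow> nat \<Rightarrow> real" where
  "dX j 0 u a = (if a = j then 1 else 0)"
| "dX j (Suc k) u a = s1 (nn_z s d W b k u a) * (\<Sum>c<d k. W k a c * dX j k u c)"

definition dZ :: "nat \<Rightarrow> nat \<Rightarrow> (nat \<Rightarrow> real) \<Rightarrow> nat \<Rightarrow> real" where
  "dZ j k u a = (\<Sum>c<d k. W k a c * dX j k u c)"

primrec ddX :: "nat \<Rightarrow> nat \<Rightarrow> nat \<Rightarrow> (nat \<Rightarrow> real) \<Rightarrow> nat \<Rightarrow> real" where
  "ddX j l 0 u a = 0"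
| "ddX j l (Suc k) u a = s2 (nn_z s d W b k u a) * dZ j k u a * dZ l k u a
      + s1 (nn_z s d W b k u a) * (\<Sum>c<d k. W k a c * ddX j l k u c)"

definition ddZ :: "nat \<Rightarrow> nat \<Rightarrow> nat \<Rightarrow> (nat \<Rightarrow> real) \<Rightarrow> nat \<Rightarrow> real" where
  "ddZ j l k u a = (\<Sum>c<d k. W k a c * ddX j l k u c)"

lemma dX_Suc': "dX j (Suc k) u a = s1 (nn_z s d W b k u a) * dZ j k u a"
  by (simp add: dZ_def)

lemma ddX_Suc': "ddX j l (Suc k) u a = s2 (nn_z s d W b k u a) * dZ j k u a * dZ l k u a
      + s1 (nn_z s d W b k u a) * ddZ j l k u a"
  by (simp add: ddZ_def)

primrec rjac :: "nat \<Rightarrow> (nat \<Rightarrow> real) \<Rightarrow> nat \<Rightarrow> nat \<Rightarrow> real" where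
  "rjac 0 u = (\<lambda>i a. W L i a)"
| "rjac (Suc m) u = (\<lambda>i c. \<Sum>a<d (L - Suc m + 1).
      (rjac m u i a * s1 (nn_z s d W b (L - Suc m) u a)) * W (L - Suc m) a c)"

primrec rhess :: "nat \<Rightarrow> nat \<Rightarrow> (nat \<Rightarrow> real) \<Rightarrow> nat \<Rightarrow> nat \<Rightarrow> real" where
  "rhess i 0 u = (\<lambda>_ _. 0)"
| "rhess i (Suc m) u = (\<lambda>p q.
      (\<Sum>c<d (L - Suc m + 1). ((\<Sum>a<d (L - Suc m + 1).
          (W (L - Suc m) a p * s1 (nn_z s d W b (L - Suc m) u a)) * rhess i m u a c)
          * s1 (nn_z s d W b (L - Suc m) u c)) * W (L - Suc m) c q)
    + (\<Sum>a<d (L - Suc m + 1). (W (L - Suc m) a p *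
          (s2 (nn_z s d W b (L - Suc m) u a) * rjac m u i a)) * W (L - Suc m) a q))"

section \<open>Forward = backward\<close>

lemma FJ: "m \<le> L \<Longrightarrow> dZ j L u i = (\<Sum>a<d (L - m). rjac m u i a * dX j (L - m) u a)"
proof (induction m)
  case 0 then show ?case by (simp add: dZ_def)
next
  case (Suc m)
  define k where "k = L - Suc m"
  have k1: "L - m = Suc k" using Suc.prems by (simp add: k_def)
  have kk: "L - Suc m + 1 = Suc k" using Suc.prems by (simp add: k_def)
  have "dZ j L u i = (\<Sum>a<d (Suc k). rjac m u i a * dX j (Suc k) u a)"
    using Suc by (simp add: k1)
  also have "\<dots> = (\<Sum>a<d (Suc k). \<Sum>c<d k. rjac m u i a * s1 (nn_z s d W b k u a) * W k a c * dX j k u c)"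
    by (simp add: sum_distrib_left mult.assoc)
  also have "\<dots> = (\<Sum>c<d k. \<Sum>a<d (Suc k). rjac m u i a * s1 (nn_z s d W b k u a) * W k a c * dX j k u c)"
    by (rule sum.swap)
  also have "\<dots> = (\<Sum>c<d k. rjac (Suc m) u i c * dX j k u c)"
    by (simp add: kk k_def[symmetric] sum_distrib_right)
  finally show ?case by (simp add: k_def)
qed

lemma FJ0: "j < d 0 \<Longrightarrow> dZ j L u i = rjac L u i j"
proof -
  assume j: "j < d 0"
  have "dZ j L u i = (\<Sum>a<d 0. rjac L u i a * (if a = j then 1 else 0))"
    using FJ[of L j u i] by simp
  also have "\<dots> = (\<Sum>a<d 0. if a = j then rjac L u i a else 0)" by (rule sum.cong) auto
  finally show ?thesis using j by simp
qed

lemma sum4_swap: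
  "(\<Sum>p\<in>P. \<Sum>q\<in>Q. \<Sum>c\<in>C. \<Sum>a\<in>A. f p q c a) = (\<Sum>a\<in>A. \<Sum>c\<in>C. \<Sum>p\<in>P. \<Sum>q\<in>Q. f p q c a)"
proof -
  have "(\<Sum>p\<in>P. \<Sum>q\<in>Q. \<Sum>c\<in>C. \<Sum>a\<in>A. f p q c a) = (\<Sum>p\<in>P. \<Sum>c\<in>C. \<Sum>q\<in>Q. \<Sum>a\<in>A. f p q c a)"
    by (intro sum.cong refl sum.swap)
  also have "\<dots> = (\<Sum>p\<in>P. \<Sum>c\<in>C. \<Sum>a\<in>A. \<Sum>q\<in>Q. f p q c a)"
    by (intro sum.cong refl sum.swap)
  also have "\<dots> = (\<Sum>c\<in>C. \<Sum>p\<in>P. \<Sum>a\<in>A. \<Sum>q\<in>Q. f p q c a)"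
    by (rule sum.swap)
  also have "\<dots> = (\<Sum>c\<in>C. \<Sum>a\<in>A. \<Sum>p\<in>P. \<Sum>q\<in>Q. f p q c a)"
    by (intro sum.cong refl sum.swap)
  also have "\<dots> = (\<Sum>a\<in>A. \<Sum>c\<in>C. \<Sum>p\<in>P. \<Sum>q\<in>Q. f p q c a)"
    by (rule sum.swap)
  finally show ?thesis .
qed

lemma FH: "m \<le> L \<Longrightarrow> ddZ j l L u i =
   (\<Sum>a<d (L - m). \<Sum>c<d (L - m). dX j (L - m) u a * rhess i m u a c * dX l (L - m) u c)
   + (\<Sum>a<d (L - m). rjac m u i a * ddX j l (L - m) u a)"
proof (induction m)
  case 0 then show ?case by (simp add: ddZ_def)
next
  case (Suc m)
  define k where "k = L - Suc m"
  have k1: "L - m = Suc k" using Suc.prems by (simp add: k_def)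
  have kk: "L - Suc m + 1 = Suc k" using Suc.prems by (simp add: k_def)
  define n where "n = d (Suc k)"
  define z where "z = nn_z s d W b k u"
  define H where "H = rhess i m u"
  define J where "J = rjac m u i"
  define Gj where "Gj = dZ j k u"
  define Gl where "Gl = dZ l k u"
  have IH: "ddZ j l L u i = (\<Sum>a<n. \<Sum>c<n. (s1 (z a) * Gj a) * H a c * (s1 (z c) * Gl c))
     + (\<Sum>a<n. J a * (s2 (z a) * Gj a * Gl a + s1 (z a) * ddZ j l k u a))"
    using Suc by (simp add: k1 n_def z_def H_def J_def Gj_def Gl_def dX_Suc' ddX_Suc' del: dX.simps(2) ddX.simps(2))
  have H': "rhess i (Suc m) u p q = (\<Sum>c<n. \<Sum>a<n. W k a p * s1 (z a) * H a c * s1 (z c) * W k c q)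
      + (\<Sum>a<n. W k a p * s2 (z a) * J a * W k a q)" for p q
    by (simp add: kk k_def[symmetric] n_def z_def H_def J_def sum_distrib_right mult.assoc)
  have J': "rjac (Suc m) u i p = (\<Sum>a<n. J a * s1 (z a) * W k a p)" for p
    by (simp add: kk k_def[symmetric] n_def z_def J_def)
  let ?x = "dX j k u" and ?y = "dX l k u" and ?dd = "ddX j l k u"
  have T1: "(\<Sum>p<d k. \<Sum>q<d k. ?x p * (\<Sum>c<n. \<Sum>a<n. W k a p * s1 (z a) * H a c * s1 (z c) * W k c q) * ?y q)
      = (\<Sum>a<n. \<Sum>c<n. (s1 (z a) * Gj a) * H a c * (s1 (z c) * Gl c))"
  proof -
    have "(\<Sum>p<d k. \<Sum>q<d k. ?x p * (\<Sum>c<n. \<Sum>a<n. W k a p * s1 (z a) * H a c * s1 (z c) * W k c q) * ?y q)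
       = (\<Sum>p<d k. \<Sum>q<d k. \<Sum>c<n. \<Sum>a<n. ?x p * (W k a p * s1 (z a) * H a c * s1 (z c) * W k c q) * ?y q)"
      by (simp add: sum_distrib_left sum_distrib_right)
    also have "\<dots> = (\<Sum>a<n. \<Sum>c<n. \<Sum>p<d k. \<Sum>q<d k. ?x p * (W k a p * s1 (z a) * H a c * s1 (z c) * W k c q) * ?y q)"
      by (rule sum4_swap)
    also have "\<dots> = (\<Sum>a<n. \<Sum>c<n. (s1 (z a) * Gj a) * H a c * (s1 (z c) * Gl c))"
      by (simp add: Gj_def Gl_def dZ_def sum_distrib_left sum_distrib_right mult.commute mult.left_commute mult.assoc)
    finally show ?thesis .
  qed
  have T2: "(\<Sum>p<d k. \<Sum>q<d k. ?x p * (\<Sum>a<n. W k a p * s2 (z a) * J a * W k a q) * ?y q)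
      = (\<Sum>a<n. J a * (s2 (z a) * Gj a * Gl a))"
  proof -
    have "(\<Sum>p<d k. \<Sum>q<d k. ?x p * (\<Sum>a<n. W k a p * s2 (z a) * J a * W k a q) * ?y q)
       = (\<Sum>p<d k. \<Sum>q<d k. \<Sum>a<n. ?x p * (W k a p * s2 (z a) * J a * W k a q) * ?y q)"
      by (simp add: sum_distrib_left sum_distrib_right)
    also have "\<dots> = (\<Sum>p<d k. \<Sum>a<n. \<Sum>q<d k. ?x p * (W k a p * s2 (z a) * J a * W k a q) * ?y q)"
      by (intro sum.cong refl sum.swap)
    also have "\<dots> = (\<Sum>a<n. \<Sum>p<d k. \<Sum>q<d k. ?x p * (W k a p * s2 (z a) * J a * W k a q) * ?y q)"
      by (rule sum.swap)
    also have "\<dots> = (\<Sum>a<n. J a * (s2 (z a) * Gj a * Gl a))"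
      by (simp add: Gj_def Gl_def dZ_def sum_distrib_left sum_distrib_right mult.commute mult.left_commute mult.assoc)
    finally show ?thesis .
  qed
  have T3: "(\<Sum>p<d k. (\<Sum>a<n. J a * s1 (z a) * W k a p) * ?dd p) = (\<Sum>a<n. J a * (s1 (z a) * ddZ j l k u a))"
  proof -
    have "(\<Sum>p<d k. (\<Sum>a<n. J a * s1 (z a) * W k a p) * ?dd p) = (\<Sum>p<d k. \<Sum>a<n. J a * s1 (z a) * W k a p * ?dd p)"
      by (simp add: sum_distrib_right)
    also have "\<dots> = (\<Sum>a<n. \<Sum>p<d k. J a * s1 (z a) * W k a p * ?dd p)" by (rule sum.swap)
    also have "\<dots> = (\<Sum>a<n. J a * (s1 (z a) * ddZ j l k u a))"
      by (simp add: ddZ_def sum_distrib_left mult.assoc)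
    finally show ?thesis .
  qed
  have "(\<Sum>a<d (L - Suc m). \<Sum>c<d (L - Suc m). dX j (L - Suc m) u a * rhess i (Suc m) u a c * dX l (L - Suc m) u c)
     + (\<Sum>a<d (L - Suc m). rjac (Suc m) u i a * ddX j l (L - Suc m) u a)
     = (\<Sum>p<d k. \<Sum>q<d k. ?x p * (\<Sum>c<n. \<Sum>a<n. W k a p * s1 (z a) * H a c * s1 (z c) * W k c q) * ?y q)
      + (\<Sum>p<d k. \<Sum>q<d k. ?x p * (\<Sum>a<n. W k a p * s2 (z a) * J a * W k a q) * ?y q)
      + (\<Sum>p<d k. (\<Sum>a<n. J a * s1 (z a) * W k a p) * ?dd p)"
    unfolding k_def[symmetric] H' J' by (simp add: distrib_left distrib_right sum.distrib)
  also have "\<dots> = ddZ j l L u i"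
    unfolding T1 T2 T3 IH by (simp add: distrib_left sum.distrib)
  finally show ?case by simp
qed

lemma FH0: "j < d 0 \<Longrightarrow> l < d 0 \<Longrightarrow> ddZ j l L u i = rhess i L u j l"
proof -
  assume j: "j < d 0" and l: "l < d 0"
  have "ddZ j l L u i = (\<Sum>a<d 0. \<Sum>c<d 0. (if a = j then 1 else 0) * rhess i L u a c * (if c = l then 1 else 0))"
    using FH[of L j l u i] by simp
  also have "\<dots> = (\<Sum>a<d 0. if a = j then (\<Sum>c<d 0. rhess i L u j c * (if c = l then 1 else 0)) else 0)"
    by (rule sum.cong) auto
  also have "\<dots> = (\<Sum>c<d 0. rhess i L u j c * (if c = l then 1 else 0))" using j by simp
  also have "\<dots> = (\<Sum>c<d 0. if c = l then rhess i L u j c else 0)" by (rule sum.cong) auto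
  finally show ?thesis using l by simp
qed

end


locale nnet_all = nnet +
  fixes S S1 S2 :: "real interval \<Rightarrow> real interval"
  assumes hs: "\<forall>x. (s has_real_derivative s1 x) (at x)"
    and hs1: "\<forall>x. (s1 has_real_derivative s2 x) (at x)"
    and encS: "ienclosure_R S s" and encS1: "ienclosure_R S1 s1" and encS2: "ienclosure_R S2 s2"
    and holS: "holder_R S" and holS1: "holder_R S1" and holS2: "holder_R S2"
    and d0: "0 < d 0"
begin

lemma D1Z_from:
  assumes "\<And>c. ((\<lambda>t. nn_x s d W b k (u(j:=t)) c) has_real_derivative dX j k (u(j:=t0)) c) (at t0)"
  shows "((\<lambda>t. nn_z s d W b k (u(j:=t)) a) has_real_derivative dZ j k (u(j:=t0)) a) (at t0)"
proof -
  have "((\<lambda>t. (\<Sum>c<d k. W k a c * nn_x s d W b k (u(j:=t)) c) + b k a) has_real_derivative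
      (\<Sum>c<d k. W k a c * dX j k (u(j:=t0)) c) + 0) (at t0)"
    by (intro DERIV_add DERIV_sum DERIV_cmult DERIV_const assms)
  then show ?thesis by (simp add: nn_z_def dZ_def)
qed

lemma D1: "((\<lambda>t. nn_x s d W b k (u(j:=t)) a) has_real_derivative dX j k (u(j:=t0)) a) (at t0)"
proof (induction k arbitrary: a)
  case 0
  show ?case
  proof (cases "a = j")
    case True then show ?thesis by (simp add: DERIV_ident)
  next
    case False then show ?thesis by simp
  qed
next
  case (Suc k)
  have z: "((\<lambda>t. nn_z s d W b k (u(j:=t)) a) has_real_derivative dZ j k (u(j:=t0)) a) (at t0)"
    by (rule D1Z_from[OF Suc.IH])
  have "((\<lambda>t. s (nn_z s d W b k (u(j:=t)) a)) has_real_derivative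
       s1 (nn_z s d W b k (u(j:=t0)) a) * dZ j k (u(j:=t0)) a) (at t0)"
    using DERIV_chain'[OF z, of s] hs by (simp add: mult.commute)
  then show ?case unfolding nn_x_Suc dX_Suc' .
qed

lemma D1Z: "((\<lambda>t. nn_z s d W b k (u(j:=t)) a) has_real_derivative dZ j k (u(j:=t0)) a) (at t0)"
  by (rule D1Z_from[OF D1])

lemma D2Z_from:
  assumes "\<And>c. ((\<lambda>t. dX j k (u(l:=t)) c) has_real_derivative ddX j l k (u(l:=t0)) c) (at t0)"
  shows "((\<lambda>t. dZ j k (u(l:=t)) a) has_real_derivative ddZ j l k (u(l:=t0)) a) (at t0)"
proof -
  have "((\<lambda>t. (\<Sum>c<d k. W k a c * dX j k (u(l:=t)) c)) has_real_derivative
      (\<Sum>c<d k. W k a c * ddX j l k (u(l:=t0)) c)) (at t0)"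
    by (intro DERIV_sum DERIV_cmult assms)
  then show ?thesis by (simp add: ddZ_def dZ_def)
qed

lemma D2: "((\<lambda>t. dX j k (u(l:=t)) a) has_real_derivative ddX j l k (u(l:=t0)) a) (at t0)"
proof (induction k arbitrary: a)
  case 0
  show ?case by simp
next
  case (Suc k)
  have z: "((\<lambda>t. nn_z s d W b k (u(l:=t)) a) has_real_derivative dZ l k (u(l:=t0)) a) (at t0)"
    by (rule D1Z)
  have sz: "((\<lambda>t. s1 (nn_z s d W b k (u(l:=t)) a)) has_real_derivative
       s2 (nn_z s d W b k (u(l:=t0)) a) * dZ l k (u(l:=t0)) a) (at t0)"
    using DERIV_chain'[OF z, of s1] hs1 by (simp add: mult.commute)
  have dz: "((\<lambda>t. dZ j k (u(l:=t)) a) has_real_derivative ddZ j l k (u(l:=t0)) a) (at t0)"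
    by (rule D2Z_from[OF Suc.IH])
  have "((\<lambda>t. s1 (nn_z s d W b k (u(l:=t)) a) * dZ j k (u(l:=t)) a) has_real_derivative
     s2 (nn_z s d W b k (u(l:=t0)) a) * dZ l k (u(l:=t0)) a * dZ j k (u(l:=t0)) a
       + ddZ j l k (u(l:=t0)) a * s1 (nn_z s d W b k (u(l:=t0)) a)) (at t0)"
    by (rule DERIV_mult[OF sz dz])
  then show ?case unfolding dX_Suc' ddX_Suc' by (rule DERIV_cong) (simp add: algebra_simps)
qed

lemma D2Z: "((\<lambda>t. dZ j k (u(l:=t)) a) has_real_derivative ddZ j l k (u(l:=t0)) a) (at t0)"
  by (rule D2Z_from[OF D2])

lemma P1: "partial j (\<lambda>u. nn_z s d W b k u a) = (\<lambda>u. dZ j k u a)"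
  unfolding partial_def using DERIV_imp_deriv[OF D1Z] by simp

lemma P2: "partial l (\<lambda>u. dZ j k u a) = (\<lambda>u. ddZ j l k u a)"
  unfolding partial_def using DERIV_imp_deriv[OF D2Z] by simp

section \<open>Interval inclusion\<close>

lemma in_interval_of[simp]: "x \<in> set_of (interval_of x)" by (simp add: set_of_eq)
lemma in_zero_ivl[simp]: "(0::real) \<in> set_of 0" by (simp add: set_of_eq)

lemma encl: "ienclosure_R T t \<Longrightarrow> x \<in> set_of X \<Longrightarrow> t x \<in> set_of (T X)"
  unfolding ienclosure_R_def by blast

lemma IX: "x \<in> box_pts (d 0) K \<Longrightarrow> a < d k \<Longrightarrow> nn_x s d W b k x a \<in> set_of (fval_x S d W b k K a)"
proof (induction k arbitrary: a)
  case 0 then show ?case by (simp add: box_pts_def)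
next
  case (Suc k)
  have "nn_x s d W b k x c \<in> set_of (fval_x S d W b k K c)" if "c < d k" for c
    using Suc.IH Suc.prems that by blast
  then show ?case
    by (auto intro!: encl[OF encS] plus_in_ivl sum_in_ivl times_in_ivl)
qed

lemma IZ: "x \<in> box_pts (d 0) K \<Longrightarrow> nn_z s d W b k x a \<in> set_of (Fval S d W b (Suc k) K a)"
proof -
  assume x: "x \<in> box_pts (d 0) K"
  have "nn_x s d W b k x c \<in> set_of (fval_x S d W b k K c)" if "c < d k" for c
    using IX[OF x that] .
  then show ?thesis unfolding nn_z_def Fval_def
    by (auto intro!: plus_in_ivl sum_in_ivl times_in_ivl)
qed

lemma jac_Suc_simp:
  assumes "k = L - Suc m" "n = d (k + 1)"
  shows "jac_steps S S1 d W b L (Suc m) K i c =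
    (\<Sum>a<n. (jac_steps S S1 d W b L m K i a * S1 (Fval S d W b (k + 1) K a)) * interval_of (W k a c))"
proof -
  define v where "v = (\<lambda>a. S1 (Fval S d W b (k + 1) K a))"
  define J where "J = jac_steps S S1 d W b L m K"
  have "jac_steps S S1 d W b L (Suc m) K i c = imat_mult n (imat_mult n J (idiag v)) (ireal_mat (W k)) i c"
    by (simp add: assms Let_def v_def J_def)
  also have "\<dots> = (\<Sum>a<n. imat_mult n J (idiag v) i a * ireal_mat (W k) a c)"
    by (simp add: imat_mult_def[of n "imat_mult n J (idiag v)"])
  also have "\<dots> = (\<Sum>a<n. (J i a * v a) * interval_of (W k a c))"
    by (intro sum.cong refl) (simp add: imat_mult_diag ireal_mat_def)
  finally show ?thesis by (simp add: v_def J_def)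
qed

lemma IJ: "x \<in> box_pts (d 0) K \<Longrightarrow> m \<le> L \<Longrightarrow> rjac m x i a \<in> set_of (jac_steps S S1 d W b L m K i a)"
proof (induction m arbitrary: i a)
  case 0 then show ?case by (simp add: ireal_mat_def)
next
  case (Suc m)
  define k where "k = L - Suc m"
  have kk: "L - Suc m + 1 = Suc k" using Suc.prems by (simp add: k_def)
  show ?case
    unfolding jac_Suc_simp[OF k_def refl]
    using Suc.IH[OF Suc.prems(1)] Suc.prems IZ[OF Suc.prems(1), of k]
    by (auto simp: kk k_def[symmetric] intro!: sum_in_ivl times_in_ivl encl[OF encS1])
qed

lemma hess_Suc_simp:
  assumes "k = L - Suc m" "n = d (k + 1)"
  shows "hess_steps S S1 S2 d W b L i (Suc m) K p q =
    (\<Sum>c<n. ((\<Sum>a<n. (interval_of (W k a p) * S1 (Fval S d W b (k + 1) K a)) * hess_steps S S1 S2 d W b L i m K a c)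
        * S1 (Fval S d W b (k + 1) K c)) * interval_of (W k c q))
  + (\<Sum>a<n. (interval_of (W k a p) * (S2 (Fval S d W b (k + 1) K a) * Jac S S1 d W b L (k + 1) K i a)) * interval_of (W k a q))"
proof -
  define v where "v = (\<lambda>a. S1 (Fval S d W b (k + 1) K a))"
  define w where "w = (\<lambda>a. S2 (Fval S d W b (k + 1) K a) * Jac S S1 d W b L (k + 1) K i a)"
  define H where "H = hess_steps S S1 S2 d W b L i m K"
  define Wm where "Wm = ireal_mat (W k)"
  define Wt where "Wt = itrans Wm"
  have "hess_steps S S1 S2 d W b L i (Suc m) K p q =
    imat_add (imat_mult n (imat_mult n (imat_mult n (imat_mult n Wt (idiag v)) H) (idiag v)) Wm)
          (imat_mult n (imat_mult n Wt (idiag w)) Wm) p q"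
    by (simp add: assms Let_def v_def w_def H_def Wm_def Wt_def)
  also have "\<dots> = (\<Sum>c<n. imat_mult n (imat_mult n (imat_mult n Wt (idiag v)) H) (idiag v) p c * Wm c q)
     + (\<Sum>a<n. imat_mult n Wt (idiag w) p a * Wm a q)"
    by (simp add: imat_add_def imat_mult_def[of n "imat_mult n (imat_mult n (imat_mult n Wt (idiag v)) H) (idiag v)"]
       imat_mult_def[of n "imat_mult n Wt (idiag w)"])
  also have "\<dots> = (\<Sum>c<n. (imat_mult n (imat_mult n Wt (idiag v)) H p c * v c) * Wm c q)
     + (\<Sum>a<n. (Wt p a * w a) * Wm a q)"
    by (intro arg_cong2[where f="(+)"] sum.cong refl) (simp_all add: imat_mult_diag)
  also have "\<dots> = (\<Sum>c<n. ((\<Sum>a<n. (Wt p a * v a) * H a c) * v c) * Wm c q)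
     + (\<Sum>a<n. (Wt p a * w a) * Wm a q)"
  proof -
    have "imat_mult n (imat_mult n Wt (idiag v)) H p c = (\<Sum>a<n. (Wt p a * v a) * H a c)" for c
      unfolding imat_mult_def[of n "imat_mult n Wt (idiag v)" H] by (rule sum.cong) (simp_all add: imat_mult_diag)
    then show ?thesis by simp
  qed
  finally show ?thesis by (simp add: v_def w_def H_def Wm_def Wt_def itrans_def ireal_mat_def)
qed

lemma IH: "x \<in> box_pts (d 0) K \<Longrightarrow> m \<le> L \<Longrightarrow> rhess i m x p q \<in> set_of (hess_steps S S1 S2 d W b L i m K p q)"
proof (induction m arbitrary: p q)
  case 0 then show ?case by simp
next
  case (Suc m)
  define k where "k = L - Suc m"
  have kk: "L - Suc m + 1 = Suc k" using Suc.prems by (simp add: k_def)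
  have jm: "Jac S S1 d W b L (Suc k) K i a = jac_steps S S1 d W b L m K i a" for a
    using Suc.prems by (simp add: Jac_def k_def Suc_diff_Suc)
  show ?case
    unfolding hess_Suc_simp[OF k_def refl]
    using Suc.IH[OF Suc.prems(1)] Suc.prems IZ[OF Suc.prems(1), of k] IJ[OF Suc.prems(1), of m]
    by (auto simp: kk k_def[symmetric] jm intro!: plus_in_ivl sum_in_ivl times_in_ivl encl[OF encS1] encl[OF encS2])
qed

lemma GX: "a < d k \<Longrightarrow> good (d 0) \<Omega> (\<lambda>K. fval_x S d W b k K a)"
proof (induction k arbitrary: a)
  case 0 then show ?case by (simp add: good_coord)
next
  case (Suc k)
  show ?case using Suc d0
    by (simp, intro good_S[OF encS holS] good_add good_sum good_mult good_const) auto
qed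

lemma GZ: "good (d 0) \<Omega> (\<lambda>K. Fval S d W b (Suc k) K a)"
  unfolding Fval_def using GX d0 by (simp, intro good_add good_sum good_mult good_const) auto

lemma GJ: "good (d 0) \<Omega> (\<lambda>K. jac_steps S S1 d W b L m K i a)"
proof (induction m arbitrary: i a)
  case 0 then show ?case by (simp add: ireal_mat_def good_const)
next
  case (Suc m)
  show ?case
    unfolding jac_Suc_simp[OF refl refl]
    using Suc d0 by (intro good_sum good_mult good_S[OF encS1 holS1] good_const) (auto simp: GZ[simplified])
qed

lemma GH: "good (d 0) \<Omega> (\<lambda>K. hess_steps S S1 S2 d W b L i m K p q)"
proof (induction m arbitrary: p q)
  case 0 then show ?case by (simp add: good_zero)
next
  case (Suc m)
  show ?case
    unfolding hess_Suc_simp[OF refl refl]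
    using Suc d0 by (intro good_add good_sum good_mult good_S[OF encS1 holS1] good_S[OF encS2 holS2] good_const)
      (auto simp: GZ[simplified] Jac_def GJ)
qed

end


section \<open>Multi-indices\<close>

definition ee :: "nat \<Rightarrow> nat \<Rightarrow> nat" where "ee j = (\<lambda>i. if i = j then 1 else 0)"
definition ee2 :: "nat \<times> nat \<Rightarrow> nat \<Rightarrow> nat" where "ee2 = (\<lambda>(j, l). \<lambda>i. ee j i + ee l i)"
definition Tset :: "nat \<Rightarrow> (nat \<times> nat) set" where "Tset n = {(j, k). j \<le> k \<and> k < n}"

lemma fold_Suc: "fold (\<lambda>j h. (partial j ^^ \<alpha> j) h) [0..<Suc m] g
    = (partial m ^^ \<alpha> m) (fold (\<lambda>j h. (partial j ^^ \<alpha> j) h) [0..<m] g)"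
  by simp

lemma Dalpha_zero: "Dalpha n (\<lambda>_. 0) g = g"
proof -
  have "fold (\<lambda>j h. (partial j ^^ (\<lambda>_. 0::nat) j) h) [0..<m] g = g" for m
    by (induction m) simp_all
  then show ?thesis by (simp add: Dalpha_def)
qed

lemma Dalpha_e: "j < n \<Longrightarrow> Dalpha n (ee j) g = partial j g"
proof -
  have "fold (\<lambda>i h. (partial i ^^ ee j i) h) [0..<m] g = (if j < m then partial j g else g)" for m
    by (induction m) (auto simp: ee_def less_Suc_eq)
  then show "j < n \<Longrightarrow> ?thesis" by (simp add: Dalpha_def)
qed

lemma Dalpha_ee: "j \<le> l \<Longrightarrow> l < n \<Longrightarrow> Dalpha n (ee2 (j, l)) g = partial l (partial j g)"
proof -
  assume jl: "j \<le> l" and ln: "l < n"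
  have "fold (\<lambda>i h. (partial i ^^ ee2 (j, l) i) h) [0..<m] g =
     (if m \<le> j then g else if m \<le> l then partial j g else partial l (partial j g))" for m
  proof (induction m)
    case 0 then show ?case by simp
  next
    case (Suc m)
    show ?case
    proof (cases "m = j")
      case True
      then show ?thesis using Suc jl
        by (cases "j = l") (auto simp: ee2_def ee_def numeral_2_eq_2)
    next
      case False
      show ?thesis
      proof (cases "m = l")
        case True
        then show ?thesis using Suc jl False by (auto simp: ee2_def ee_def)
      next
        case False2: False
        then show ?thesis using Suc jl False by (auto simp: ee2_def ee_def le_Suc_eq)
      qed
    qed
  qed
  then show ?thesis using ln jl by (simp add: Dalpha_def)
qed

lemma sum_ee: "j < n \<Longrightarrow> (\<Sum>i<n. ee j i) = 1"
  by (simp add: ee_def)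

lemma le1_cases:
  assumes "\<forall>j\<ge>n. \<alpha> j = 0" "(\<Sum>j<n. \<alpha> j) \<le> (1::nat)"
  shows "\<alpha> = (\<lambda>_. 0) \<or> (\<exists>j<n. \<alpha> = ee j)"
proof (cases "\<forall>j<n. \<alpha> j = 0")
  case True
  then have "\<alpha> = (\<lambda>_. 0)" using assms(1) by (metis not_less)
  then show ?thesis by simp
next
  case False
  then obtain j where j: "j < n" "\<alpha> j \<noteq> 0" by auto
  have split: "(\<Sum>i<n. \<alpha> i) = \<alpha> j + (\<Sum>i\<in>{..<n} - {j}. \<alpha> i)"
    using j by (simp add: sum.remove)
  have "\<alpha> i = 0" if "i < n" "i \<noteq> j" for i
  proof -
    have "\<alpha> i \<le> (\<Sum>i\<in>{..<n} - {j}. \<alpha> i)" using that by (intro member_le_sum) auto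
    then show ?thesis using split assms(2) j by linarith
  qed
  moreover have "\<alpha> j = 1" using split assms(2) j by linarith
  ultimately have "\<alpha> = ee j" using assms(1) j unfolding ee_def by (metis not_less)
  then show ?thesis using j by blast
qed

lemma multiidx2:
  "multiidx n 2 = {\<lambda>_. 0} \<union> ee ` {..<n} \<union> ee2 ` Tset n"
proof (intro equalityI subsetI)
  fix \<alpha> assume "\<alpha> \<in> multiidx n 2"
  then have A: "\<forall>j\<ge>n. \<alpha> j = 0" "(\<Sum>j<n. \<alpha> j) \<le> 2" by (auto simp: multiidx_def)
  show "\<alpha> \<in> {\<lambda>_. 0} \<union> ee ` {..<n} \<union> ee2 ` Tset n"
  proof (cases "\<forall>j<n. \<alpha> j = 0")
    case True
    then have "\<alpha> = (\<lambda>_. 0)" using A(1) by (metis not_less)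
    then show ?thesis by simp
  next
    case False
    then obtain j where j: "j < n" "\<alpha> j \<noteq> 0" by auto
    define \<beta> where "\<beta> = \<alpha>(j := \<alpha> j - 1)"
    have s1: "(\<Sum>i<n. \<alpha> i) = \<alpha> j + (\<Sum>i\<in>{..<n} - {j}. \<alpha> i)"
      using j by (simp add: sum.remove)
    have s2: "(\<Sum>i<n. \<beta> i) = \<beta> j + (\<Sum>i\<in>{..<n} - {j}. \<beta> i)"
      using j by (simp add: sum.remove)
    have "(\<Sum>i\<in>{..<n} - {j}. \<beta> i) = (\<Sum>i\<in>{..<n} - {j}. \<alpha> i)"
      by (intro sum.cong) (auto simp: \<beta>_def)
    then have "(\<Sum>i<n. \<beta> i) \<le> 1" using s1 s2 A(2) j by (simp add: \<beta>_def)
    moreover have "\<forall>i\<ge>n. \<beta> i = 0" using A(1) j by (auto simp: \<beta>_def)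
    ultimately have "\<beta> = (\<lambda>_. 0) \<or> (\<exists>l<n. \<beta> = ee l)" using le1_cases by blast
    then show ?thesis
    proof
      assume "\<beta> = (\<lambda>_. 0)"
      then have "\<alpha> = ee j" using j unfolding \<beta>_def ee_def fun_eq_iff
        by (metis One_nat_def Suc_pred fun_upd_other fun_upd_same not_gr0)
      then show ?thesis using j by blast
    next
      assume "\<exists>l<n. \<beta> = ee l"
      then obtain l where l: "l < n" "\<beta> = ee l" by blast
      have bj: "\<alpha> j - 1 = ee l j" using l(2) unfolding \<beta>_def by (metis fun_upd_same)
      have bi: "\<alpha> i = ee l i" if "i \<noteq> j" for i using l(2) that unfolding \<beta>_def by (metis fun_upd_other)
      have "\<alpha> = (\<lambda>i. ee j i + ee l i)"
      proof
        fix i show "\<alpha> i = ee j i + ee l i"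
        proof (cases "i = j")
          case True then show ?thesis using bj j(2) by (simp add: ee_def)
        next
          case False then show ?thesis using bi[OF False] by (simp add: ee_def)
        qed
      qed
      moreover have "(\<lambda>i. ee j i + ee l i) = ee2 (min j l, max j l)"
        by (auto simp: ee2_def min_def max_def)
      moreover have "(min j l, max j l) \<in> Tset n" using j l by (auto simp: Tset_def)
      ultimately show ?thesis by blast
    qed
  qed
next
  fix \<alpha> assume "\<alpha> \<in> {\<lambda>_. 0} \<union> ee ` {..<n} \<union> ee2 ` Tset n"
  then consider "\<alpha> = (\<lambda>_. 0)" | j where "j < n" "\<alpha> = ee j" | j l where "j \<le> l" "l < n" "\<alpha> = ee2 (j, l)"
    by (auto simp: Tset_def)
  then show "\<alpha> \<in> multiidx n 2"
  proof cases
    case 1 then show ?thesis by (simp add: multiidx_def)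
  next
    case 2 then show ?thesis by (simp add: multiidx_def ee_def)
  next
    case 3
    then have "(\<Sum>i<n. \<alpha> i) = (\<Sum>i<n. ee j i) + (\<Sum>i<n. ee l i)"
      by (simp add: ee2_def sum.distrib)
    then show ?thesis using 3 by (simp add: multiidx_def sum_ee ee2_def ee_def)
  qed
qed

lemma ee_inj: "inj ee"
  by (rule injI) (metis ee_def one_neq_zero)

lemma ee2_inj: "inj_on ee2 (Tset n)"
proof (rule inj_onI)
  fix x y assume x: "x \<in> Tset n" and y: "y \<in> Tset n" and e: "ee2 x = ee2 y"
  obtain j l where xx: "x = (j, l)" "j \<le> l" using x by (auto simp: Tset_def)
  obtain j' l' where yy: "y = (j', l')" "j' \<le> l'" using y by (auto simp: Tset_def)
  have E: "ee j i + ee l i = ee j' i + ee l' i" for i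
    using e xx yy by (auto simp: ee2_def fun_eq_iff)
  have 1: "j = j' \<or> j = l'" using E[of j] by (auto simp: ee_def split: if_splits)
  have 2: "j' = j \<or> j' = l" using E[of j'] by (auto simp: ee_def split: if_splits)
  have 3: "l = j' \<or> l = l'" using E[of l] by (auto simp: ee_def split: if_splits)
  have 4: "l' = j \<or> l' = l" using E[of l'] by (auto simp: ee_def split: if_splits)
  have "j = j' \<and> l = l'" using 1 2 3 4 xx(2) yy(2) by linarith
  then show "x = y" using xx yy by simp
qed

lemma multiidx2_disj:
  "{\<lambda>_. 0} \<inter> ee ` {..<n} = {}" "({\<lambda>_. 0} \<union> ee ` {..<n}) \<inter> ee2 ` Tset n = {}"
proof -
  have nz: "ee j \<noteq> (\<lambda>_. 0)" for j
  proof
    assume "ee j = (\<lambda>_. 0)"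
    then have "ee j j = 0" by simp
    then show False by (simp add: ee_def)
  qed
  then have "(\<lambda>_. 0) \<noteq> ee j" for j by (rule not_sym)
  then show "{\<lambda>_. 0} \<inter> ee ` {..<n} = {}" by auto
  have Z: "ee2 (j, l) \<noteq> (\<lambda>_. 0)" for j l
  proof
    assume "ee2 (j, l) = (\<lambda>_. 0)"
    then have "ee2 (j, l) j = 0" by simp
    then show False by (simp add: ee2_def ee_def)
  qed
  have E1: "ee2 (j, l) \<noteq> ee i" if "j \<le> l" for i j l
  proof
    assume "ee2 (j, l) = ee i"
    then have E: "ee j x + ee l x = ee i x" for x by (auto simp: ee2_def fun_eq_iff)
    have 1: "i = j \<and> l \<noteq> j" using E[of j] by (auto simp: ee_def split: if_splits)
    have 2: "i = l" using E[of l] by (auto simp: ee_def split: if_splits)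
    show False using 1 2 by simp
  qed
  have "x \<notin> ee2 ` Tset n" if "x \<in> {\<lambda>_. 0} \<union> ee ` {..<n}" for x
  proof
    assume "x \<in> ee2 ` Tset n"
    then obtain j l where jl: "j \<le> l" "x = ee2 (j, l)" by (auto simp: Tset_def)
    from that consider "x = (\<lambda>_. 0)" | i where "x = ee i" by blast
    then show False
    proof cases
      case 1 then show False using Z jl by metis
    next
      case 2 then show False using E1 jl by metis
    qed
  qed
  then show "({\<lambda>_. 0} \<union> ee ` {..<n}) \<inter> ee2 ` Tset n = {}" by blast
qed

lemma sum_multiidx2:
  "(\<Sum>\<alpha>\<in>multiidx n 2. h \<alpha>) = h (\<lambda>_. 0) + (\<Sum>j<n. h (ee j)) + (\<Sum>jl\<in>Tset n. h (ee2 jl))"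
proof -
  have fT: "finite (Tset n)"
    by (rule finite_subset[of _ "{..<n} \<times> {..<n}"]) (auto simp: Tset_def)
  have "(\<Sum>\<alpha>\<in>multiidx n 2. h \<alpha>) = (\<Sum>\<alpha>\<in>{\<lambda>_. 0} \<union> ee ` {..<n}. h \<alpha>) + (\<Sum>\<alpha>\<in>ee2 ` Tset n. h \<alpha>)"
    unfolding multiidx2 using fT multiidx2_disj by (intro sum.union_disjoint) auto
  also have "(\<Sum>\<alpha>\<in>{\<lambda>_. 0} \<union> ee ` {..<n}. h \<alpha>) = h (\<lambda>_. 0) + (\<Sum>\<alpha>\<in>ee ` {..<n}. h \<alpha>)"
    using multiidx2_disj(1)[of n] by (subst sum.union_disjoint) auto
  also have "(\<Sum>\<alpha>\<in>ee ` {..<n}. h \<alpha>) = (\<Sum>j<n. h (ee j))"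
    using ee_inj by (simp add: sum.reindex inj_on_def)
  also have "(\<Sum>\<alpha>\<in>ee2 ` Tset n. h \<alpha>) = (\<Sum>jl\<in>Tset n. h (ee2 jl))"
    using ee2_inj by (simp add: sum.reindex)
  finally show ?thesis .
qed


lemma finite_T: "finite {(j, k). j \<le> k \<and> k < (n::nat)}"
  by (rule finite_subset[of _ "{..<n} \<times> {..<n}"]) auto

context nnet_all
begin

definition fex :: "real \<Rightarrow> (nat \<Rightarrow> real) \<Rightarrow> real" where
  "fex p x = (\<Sum>i<d (L + 1). \<bar>nn_z s d W b L x i\<bar> powr p + (\<Sum>j<d 0. \<bar>dZ j L x i\<bar> powr p)
      + (\<Sum>(j, l)\<in>Tset (d 0). \<bar>ddZ j l L x i\<bar> powr p))"

lemma f_sob_eq: "f_sob (d 0) 2 p (d (L + 1)) (nn s d W b L) = fex p"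
proof
  fix x
  have nnz: "(\<lambda>u. nn s d W b L u i) = (\<lambda>u. nn_z s d W b L u i)" for i by (simp add: nn_def)
  have "(\<Sum>\<alpha>\<in>multiidx (d 0) 2. \<bar>Dalpha (d 0) \<alpha> (\<lambda>u. nn s d W b L u i) x\<bar> powr p)
     = \<bar>nn_z s d W b L x i\<bar> powr p + (\<Sum>j<d 0. \<bar>dZ j L x i\<bar> powr p)
      + (\<Sum>(j, l)\<in>Tset (d 0). \<bar>ddZ j l L x i\<bar> powr p)" for i
  proof -
    have "(\<Sum>j<d 0. \<bar>Dalpha (d 0) (ee j) (\<lambda>u. nn s d W b L u i) x\<bar> powr p) = (\<Sum>j<d 0. \<bar>dZ j L x i\<bar> powr p)"
      by (intro sum.cong refl) (simp add: nnz Dalpha_e P1)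
    moreover have "(\<Sum>jl\<in>Tset (d 0). \<bar>Dalpha (d 0) (ee2 jl) (\<lambda>u. nn s d W b L u i) x\<bar> powr p)
       = (\<Sum>(j, l)\<in>Tset (d 0). \<bar>ddZ j l L x i\<bar> powr p)"
      by (intro sum.cong refl) (auto simp: nnz Dalpha_ee P1 P2 Tset_def)
    ultimately show ?thesis
      unfolding sum_multiidx2 by (simp add: Dalpha_zero nnz)
  qed
  then show "f_sob (d 0) 2 p (d (L + 1)) (nn s d W b L) x = fex p x"
    unfolding f_sob_def fex_def by simp
qed

lemma fex_encl:
  assumes x: "x \<in> box_pts (d 0) K" and p: "1 \<le> p"
  shows "fex p x \<in> set_of (F_enc S S1 S2 d W b L p K)"
proof -
  have a: "\<bar>nn_z s d W b L x i\<bar> powr p \<in> set_of (ipowr (abs_interval (Fval S d W b (L + 1) K i)) p)" for i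
    using IZ[OF x, of L i] p by (auto intro!: ipowr_in abs_in_ivl lower_abs_nonneg)
  have b: "\<bar>dZ j L x i\<bar> powr p \<in> set_of (ipowr (abs_interval (Jac S S1 d W b L 0 K i j)) p)" if "j < d 0" for i j
    using IJ[OF x, of L i j] p FJ0[OF that, of x i] by (auto simp: Jac_def intro!: ipowr_in abs_in_ivl lower_abs_nonneg)
  have c: "\<bar>ddZ j l L x i\<bar> powr p \<in> set_of (ipowr (abs_interval (Hess S S1 S2 d W b L i 0 K j l)) p)"
    if "j < d 0" "l < d 0" for i j l
    using IH[OF x, of L i j l] p FH0[OF that, of x i] by (auto simp: Hess_def intro!: ipowr_in abs_in_ivl lower_abs_nonneg)
  show ?thesis
    unfolding fex_def F_enc_def
    using a b c by (auto simp: Tset_def intro!: sum_in_ivl plus_in_ivl)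
qed

lemma F_good: "1 \<le> p \<Longrightarrow> good (d 0) \<Omega> (F_enc S S1 S2 d W b L p)"
proof -
  assume p: "1 \<le> p"
  have "good (d 0) \<Omega> (\<lambda>K. case jk of (j, k) \<Rightarrow> ipowr (abs_interval (Hess S S1 S2 d W b L i 0 K j k)) p)" for i jk
    using p by (cases jk) (simp add: Hess_def good_ipowr GH)
  then show ?thesis
    unfolding F_enc_def[abs_def] using p d0
    by (intro good_sum good_add good_ipowr) (auto simp: Jac_def GJ GZ[simplified] finite_T)
qed

lemma cont_s: "continuous_on UNIV s"
  using hs by (intro continuous_at_imp_continuous_on) (auto intro: DERIV_isCont)

lemma cont_s1: "continuous_on UNIV s1"
  using hs1 by (intro continuous_at_imp_continuous_on) (auto intro: DERIV_isCont)

lemma cont_s2: "continuous_on UNIV s2"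
proof -
  obtain C g where Cg: "0 \<le> C" "0 < g" "\<forall>X. width (S2 X) \<le> C * width X powr g"
    using holS2 unfolding holder_R_def by blast
  have bound: "\<bar>s2 y - s2 x\<bar> \<le> C * \<bar>y - x\<bar> powr g" for x y
  proof -
    define X where "X = Ivl (min x y) (max x y)"
    have "x \<in> set_of X" "y \<in> set_of X" by (auto simp: X_def set_of_eq)
    then have "s2 x \<in> set_of (S2 X)" "s2 y \<in> set_of (S2 X)"
      by (auto intro!: encl[OF encS2])
    then have "\<bar>s2 y - s2 x\<bar> \<le> width (S2 X)" by (auto simp: set_of_eq width_def)
    also have "\<dots> \<le> C * width X powr g" using Cg by auto
    also have "width X = \<bar>y - x\<bar>" by (simp add: X_def width_def)
    finally show ?thesis .
  qed
  have "isCont s2 x" for x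
    unfolding isCont_def LIM_eq
  proof (intro allI impI)
    fix r :: real assume r: "0 < r"
    define \<delta> where "\<delta> = (r / (C + 1)) powr (1 / g)"
    have d: "0 < \<delta>" using r Cg by (simp add: \<delta>_def)
    have "\<forall>y. y \<noteq> x \<and> norm (y - x) < \<delta> \<longrightarrow> norm (s2 y - s2 x) < r"
    proof (intro allI impI)
      fix y assume y: "y \<noteq> x \<and> norm (y - x) < \<delta>"
      have "\<bar>y - x\<bar> powr g < \<delta> powr g"
        using y Cg by (intro powr_less_mono2) auto
      also have "\<delta> powr g = r / (C + 1)"
        using r Cg by (simp add: \<delta>_def powr_powr)
      finally have 1: "\<bar>y - x\<bar> powr g < r / (C + 1)" .
      have "C * \<bar>y - x\<bar> powr g \<le> C * (r / (C + 1))" using 1 Cg by (intro mult_left_mono) auto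
      also have "\<dots> < r" using r Cg by (simp add: field_simps)
      finally show "norm (s2 y - s2 x) < r" using bound[of y x] by simp
    qed
    then show "\<exists>s>0. \<forall>y. y \<noteq> x \<and> norm (y - x) < s \<longrightarrow> norm (s2 y - s2 x) < r" using d by blast
  qed
  then show ?thesis by (intro continuous_at_imp_continuous_on) auto
qed

lemma comp_cont: "continuous_on UNIV h \<Longrightarrow> continuous_on UNIV f \<Longrightarrow> continuous_on UNIV (\<lambda>x. h (f x))"
  by (rule continuous_on_compose2) auto

lemma CX: "continuous_on UNIV (\<lambda>x. nn_x s d W b k x a)"
proof (induction k arbitrary: a)
  case 0 then show ?case by simp
next
  case (Suc k)
  have "continuous_on UNIV (\<lambda>x. nn_z s d W b k x a)"
    unfolding nn_z_def using Suc by (intro continuous_intros) auto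
  then show ?case unfolding nn_x_Suc by (rule comp_cont[OF cont_s])
qed

lemma CZ: "continuous_on UNIV (\<lambda>x. nn_z s d W b k x a)"
  unfolding nn_z_def using CX by (intro continuous_intros) auto

lemma CdX: "continuous_on UNIV (\<lambda>x. dX j k x a)"
proof (induction k arbitrary: a)
  case 0 then show ?case by simp
next
  case (Suc k)
  show ?case unfolding dX.simps
    using Suc comp_cont[OF cont_s1 CZ] by (intro continuous_intros) auto
qed

lemma CdZ: "continuous_on UNIV (\<lambda>x. dZ j k x a)"
  unfolding dZ_def using CdX by (intro continuous_intros) auto

lemma CddX: "continuous_on UNIV (\<lambda>x. ddX j l k x a)"
proof (induction k arbitrary: a)
  case 0 then show ?case by simp
next
  case (Suc k)
  show ?case unfolding ddX.simps
    using Suc comp_cont[OF cont_s1 CZ] comp_cont[OF cont_s2 CZ] CdZ by (intro continuous_intros) auto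
qed

lemma CddZ: "continuous_on UNIV (\<lambda>x. ddZ j l k x a)"
  unfolding ddZ_def using CddX by (intro continuous_intros) auto

lemma cont_abs_powr: "0 < p \<Longrightarrow> continuous_on UNIV f \<Longrightarrow> continuous_on UNIV (\<lambda>x. \<bar>f x :: real\<bar> powr p)"
  by (intro continuous_on_powr' continuous_intros) auto

lemma cont_fex: "1 \<le> p \<Longrightarrow> continuous_on UNIV (fex p)"
proof -
  assume p: "1 \<le> p"
  have "continuous_on UNIV (\<lambda>x. case jl of (j, l) \<Rightarrow> \<bar>ddZ j l L x i\<bar> powr p)" for jl i
    using p by (cases jl) (simp add: cont_abs_powr CddZ)
  then show ?thesis
    unfolding fex_def[abs_def] using p
    by (intro continuous_intros cont_abs_powr CZ CdZ) auto
qed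

end


section \<open>Doerfler marking\<close>

lemma dstep_sub: "M \<subseteq> P \<Longrightarrow> dorfler_step \<eta> P M \<subseteq> P"
  unfolding dorfler_step_def by auto

lemma diter_sub: "(dorfler_step \<eta> P ^^ k) {} \<subseteq> P"
  by (induction k) (auto intro: dstep_sub[THEN subsetD])

lemma dstep_grow:
  assumes "finite P" "M \<subseteq> P" "M \<noteq> P"
  shows "card M < card (dorfler_step \<eta> P M)"
proof -
  have ne: "P - M \<noteq> {}" "finite (P - M)" using assms by auto
  have "Max (\<eta> ` (P - M)) \<in> \<eta> ` (P - M)" using ne by (intro Max_in) auto
  then obtain K where K: "K \<in> P - M" "\<eta> K = Max (\<eta> ` (P - M))" by auto
  then have "K \<in> dorfler_step \<eta> P M" "K \<notin> M" unfolding dorfler_step_def by auto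
  moreover have "M \<subseteq> dorfler_step \<eta> P M" unfolding dorfler_step_def by auto
  moreover have "finite (dorfler_step \<eta> P M)"
    using dstep_sub[OF assms(2)] assms(1) finite_subset by blast
  ultimately have "M \<subset> dorfler_step \<eta> P M" "finite (dorfler_step \<eta> P M)" by blast+
  then show ?thesis by (simp add: psubset_card_mono)
qed

lemma diter_card: "finite P \<Longrightarrow> min k (card P) \<le> card ((dorfler_step \<eta> P ^^ k) {})"
proof (induction k)
  case 0 then show ?case by simp
next
  case (Suc k)
  let ?M = "(dorfler_step \<eta> P ^^ k) {}"
  show ?case
  proof (cases "?M = P")
    case True
    then have "(dorfler_step \<eta> P ^^ Suc k) {} = P"
      using dstep_sub[of P P \<eta>] by (auto simp: dorfler_step_def)
    then show ?thesis by simp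
  next
    case False
    then have "card ?M < card (dorfler_step \<eta> P ?M)" using dstep_grow[OF Suc.prems diter_sub] by blast
    then show ?thesis using Suc by simp
  qed
qed

lemma dorfler_prop:
  assumes "finite P" "\<forall>K\<in>P. 0 \<le> \<eta> K" "\<theta> \<le> 1" "0 \<le> \<theta>"
  shows "dorfler \<theta> \<eta> P \<subseteq> P" "\<theta> * sum \<eta> P \<le> sum \<eta> (dorfler \<theta> \<eta> P)"
proof -
  show "dorfler \<theta> \<eta> P \<subseteq> P" unfolding dorfler_def by (rule diter_sub)
  have "card P \<le> card ((dorfler_step \<eta> P ^^ card P) {})" using diter_card[OF assms(1), of "card P" \<eta>] by simp
  then have eq: "(dorfler_step \<eta> P ^^ card P) {} = P"
    by (rule card_seteq[OF assms(1) diter_sub])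
  have "\<theta> * sum \<eta> P \<le> sum \<eta> P"
    using assms sum_nonneg[of P \<eta>] by (intro mult_left_le_one_le) auto
  then have ex: "\<exists>k. \<theta> * sum \<eta> P \<le> sum \<eta> ((dorfler_step \<eta> P ^^ k) {})"
    using eq by (intro exI[of _ "card P"]) simp
  show "\<theta> * sum \<eta> P \<le> sum \<eta> (dorfler \<theta> \<eta> P)"
    unfolding dorfler_def by (rule LeastI_ex[OF ex])
qed

definition ch :: "nat \<Rightarrow> (nat \<Rightarrow> nat) \<Rightarrow> ibox \<Rightarrow> (nat \<Rightarrow> nat) \<Rightarrow> ibox" where
  "ch n m K t = (\<lambda>i. if i < n then Ivl (lower (K i) + real (t i) * width (K i) / real (m i))
                                     (lower (K i) + real (t i + 1) * width (K i) / real (m i)) else K i)"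

definition obox :: "nat \<Rightarrow> ibox \<Rightarrow> (nat \<Rightarrow> real) set" where
  "obox n K = {x. \<forall>j<n. lower (K j) < x j \<and> x j < upper (K j)}"

lemma ch_lu:
  assumes "i < n"
  shows "lower (ch n m K t i) = lower (K i) + real (t i) * width (K i) / real (m i)"
    "upper (ch n m K t i) = lower (K i) + real (t i + 1) * width (K i) / real (m i)"
proof -
  have "real (t i) * width (K i) / real (m i) \<le> real (t i + 1) * width (K i) / real (m i)"
    by (intro divide_right_mono mult_right_mono) auto
  then show "lower (ch n m K t i) = lower (K i) + real (t i) * width (K i) / real (m i)"
    "upper (ch n m K t i) = lower (K i) + real (t i + 1) * width (K i) / real (m i)"
    using assms by (auto simp: ch_def)
qed

lemma ch_width: "i < n \<Longrightarrow> width (ch n m K t i) = width (K i) / real (m i)"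
  by (simp add: width_def ch_lu add_divide_distrib distrib_right)

context
  fixes n :: nat and m :: "nat \<Rightarrow> nat" and K :: ibox
  assumes m: "\<forall>i<n. 1 \<le> m i" and nd: "\<forall>i<n. lower (K i) < upper (K i)"
begin

lemma wpos: "i < n \<Longrightarrow> 0 < width (K i)"
  using nd by (simp add: width_def)

lemma ch_nd: "i < n \<Longrightarrow> lower (ch n m K t i) < upper (ch n m K t i)"
proof -
  assume i: "i < n"
  have "real (t i) * width (K i) / real (m i) < real (t i + 1) * width (K i) / real (m i)"
    using wpos[OF i] m i by (intro divide_strict_right_mono mult_strict_right_mono) auto
  then show ?thesis using i by (simp add: ch_lu)
qed

lemma ch_range:
  assumes "t \<in> PiE {..<n} (\<lambda>i. {..<m i})" "i < n"
  shows "lower (K i) \<le> lower (ch n m K t i)" "upper (ch n m K t i) \<le> upper (K i)"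
proof -
  have "t i \<in> {..<m i}" using PiE_mem[OF assms(1)] assms(2) by blast
  then have ti: "t i + 1 \<le> m i" by simp
  have w: "0 < width (K i)" "0 < real (m i)" using wpos[OF assms(2)] m assms(2) by auto
  have "0 \<le> real (t i) * width (K i) / real (m i)" using w by simp
  then show "lower (K i) \<le> lower (ch n m K t i)" unfolding ch_lu(1)[OF assms(2)] by linarith
  have "real (t i + 1) * width (K i) / real (m i) \<le> real (m i) * width (K i) / real (m i)"
    using ti w by (intro divide_right_mono mult_right_mono) auto
  also have "\<dots> = width (K i)" using w by simp
  finally show "upper (ch n m K t i) \<le> upper (K i)" unfolding ch_lu(2)[OF assms(2)] width_def by linarith
qed

lemma ch_sub: "t \<in> PiE {..<n} (\<lambda>i. {..<m i}) \<Longrightarrow> box_sub n (ch n m K t) K"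
proof -
  assume t: "t \<in> PiE {..<n} (\<lambda>i. {..<m i})"
  have "set_of (ch n m K t j) \<subseteq> set_of (K j)" if "j < n" for j
    using ch_range[OF t that] by (auto simp: set_of_eq)
  then show ?thesis by (simp add: box_sub_def)
qed

lemma ch_obox: "t \<in> PiE {..<n} (\<lambda>i. {..<m i}) \<Longrightarrow> obox n (ch n m K t) \<subseteq> obox n K"
proof
  fix x assume t: "t \<in> PiE {..<n} (\<lambda>i. {..<m i})" and x: "x \<in> obox n (ch n m K t)"
  have "lower (K j) < x j \<and> x j < upper (K j)" if "j < n" for j
    using ch_range[OF t that] x that unfolding obox_def by fastforce
  then show "x \<in> obox n K" by (simp add: obox_def)
qed

lemma ch_disj:
  assumes t: "t \<in> PiE {..<n} (\<lambda>i. {..<m i})" and t': "t' \<in> PiE {..<n} (\<lambda>i. {..<m i})" and ne: "t \<noteq> t'"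
  shows "obox n (ch n m K t) \<inter> obox n (ch n m K t') = {}"
proof -
  obtain i where i0: "t i \<noteq> t' i" using ne by (auto simp: fun_eq_iff)
  have "i < n"
  proof (rule ccontr)
    assume "\<not> i < n"
    then have "t i = undefined" "t' i = undefined" using PiE_arb[OF t] PiE_arb[OF t'] by auto
    then show False using i0 by simp
  qed
  note i = this i0
  have w: "0 < width (K i)" "0 < real (m i)" using wpos[OF i(1)] m i(1) by auto
  have key: "upper (ch n m K t i) \<le> lower (ch n m K t' i)" if "t i < t' i" for t t'
  proof -
    have "real (t i + 1) * width (K i) / real (m i) \<le> real (t' i) * width (K i) / real (m i)"
      using that w by (intro divide_right_mono mult_right_mono) auto
    then show ?thesis using i(1) by (simp add: ch_lu)
  qed
  show ?thesis
  proof (rule equals0I)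
    fix x assume "x \<in> obox n (ch n m K t) \<inter> obox n (ch n m K t')"
    then have a: "lower (ch n m K t i) < x i" "x i < upper (ch n m K t i)"
      and b: "lower (ch n m K t' i) < x i" "x i < upper (ch n m K t' i)"
      using i(1) unfolding obox_def by auto
    show False
    proof (cases "t i < t' i")
      case True
      then show False using key[of t t'] a b by linarith
    next
      case False
      then have "t' i < t i" using i by simp
      then show False using key[of t' t] a b by linarith
    qed
  qed
qed

lemma ch_cover:
  assumes x: "x \<in> box_pts n K"
  shows "\<exists>t\<in>PiE {..<n} (\<lambda>i. {..<m i}). x \<in> box_pts n (ch n m K t)"
proof -
  define y where "y i = (x i - lower (K i)) * real (m i) / width (K i)" for i
  define t where "t i = (if i < n then min (m i - 1) (nat \<lfloor>y i\<rfloor>) else undefined)" for i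
  have t: "t \<in> PiE {..<n} (\<lambda>i. {..<m i})"
    using m by (auto simp: t_def PiE_def extensional_def)
  have "x i \<in> set_of (ch n m K t i)" if i: "i < n" for i
  proof -
    have w: "0 < width (K i)" "1 \<le> real (m i)" using wpos[OF i] m i by auto
    have xi: "lower (K i) \<le> x i" "x i \<le> upper (K i)" using x i by (auto simp: box_pts_def set_of_eq)
    have y0: "0 \<le> y i" using xi w by (simp add: y_def)
    have ym: "y i \<le> real (m i)"
    proof -
      have "(x i - lower (K i)) * real (m i) \<le> width (K i) * real (m i)"
        using xi w by (intro mult_right_mono) (auto simp: width_def)
      then show ?thesis using w by (simp add: y_def divide_le_eq)
    qed
    have eqx: "x i = lower (K i) + y i * width (K i) / real (m i)"
      using w by (simp add: y_def)
    have lo: "real (t i) \<le> y i"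
    proof -
      have "real (nat \<lfloor>y i\<rfloor>) \<le> y i" using y0 by linarith
      then show ?thesis using i by (auto simp: t_def min_def)
    qed
    have hi: "y i \<le> real (t i + 1)"
    proof (cases "nat \<lfloor>y i\<rfloor> \<le> m i - 1")
      case True
      then have "t i = nat \<lfloor>y i\<rfloor>" using i by (simp add: t_def)
      then show ?thesis using y0 by linarith
    next
      case False
      then have "t i = m i - 1" using i by (simp add: t_def)
      then have "real (t i + 1) = real (m i)" using w by simp
      then show ?thesis using ym by simp
    qed
    have "real (t i) * width (K i) / real (m i) \<le> y i * width (K i) / real (m i)"
      using lo w by (intro divide_right_mono mult_right_mono) auto
    moreover have "y i * width (K i) / real (m i) \<le> real (t i + 1) * width (K i) / real (m i)"
      using hi w by (intro divide_right_mono mult_right_mono) auto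
    ultimately show ?thesis using i eqx by (simp add: set_of_eq ch_lu)
  qed
  then show ?thesis using t by (auto simp: box_pts_def)
qed

lemma ch_vol: "box_vol n (ch n m K t) = (\<Prod>i<n. width (K i) / real (m i))"
  unfolding box_vol_def by (intro prod.cong refl) (simp add: ch_width)

lemma ch_vol_sum: "(\<Sum>t\<in>PiE {..<n} (\<lambda>i. {..<m i}). box_vol n (ch n m K t)) = box_vol n K"
proof -
  have "(\<Sum>t\<in>PiE {..<n} (\<lambda>i. {..<m i}). box_vol n (ch n m K t))
      = real (card (PiE {..<n} (\<lambda>i. {..<m i}))) * (\<Prod>i<n. width (K i) / real (m i))"
    by (simp add: ch_vol)
  also have "real (card (PiE {..<n} (\<lambda>i. {..<m i}))) = (\<Prod>i<n. real (m i))"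
    by (simp add: card_PiE)
  also have "(\<Prod>i<n. real (m i)) * (\<Prod>i<n. width (K i) / real (m i)) = (\<Prod>i<n. width (K i))"
    by (subst prod.distrib[symmetric]) (intro prod.cong refl, use m in auto)
  finally show ?thesis by (simp add: box_vol_def)
qed

end


definition ndb :: "nat \<Rightarrow> ibox \<Rightarrow> bool" where
  "ndb n K \<longleftrightarrow> (\<forall>j<n. lower (K j) < upper (K j))"

definition pinv :: "nat \<Rightarrow> ibox \<Rightarrow> ibox set \<Rightarrow> bool" where
  "pinv n \<Omega> P \<longleftrightarrow> finite P \<and> (\<forall>K\<in>P. box_sub n K \<Omega> \<and> ndb n K)
     \<and> (\<forall>K\<in>P. \<forall>K'\<in>P. K \<noteq> K' \<longrightarrow> obox n K \<inter> obox n K' = {})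
     \<and> box_pts n \<Omega> \<subseteq> (\<Union>K\<in>P. box_pts n K)"

lemma box_sub_trans: "box_sub n A B \<Longrightarrow> box_sub n B C \<Longrightarrow> box_sub n A C"
  unfolding box_sub_def by blast

lemma vol_nonneg: "0 \<le> box_vol n K"
  unfolding box_vol_def by (intro prod_nonneg) auto

lemma eta_nonneg: "0 \<le> eta n F K"
  unfolding eta_def using vol_nonneg by simp

lemma vol_pos: "ndb n K \<Longrightarrow> 0 < box_vol n K"
  unfolding box_vol_def ndb_def width_def by (intro prod_pos) auto

lemma sum_Un_le': "finite A \<Longrightarrow> finite B \<Longrightarrow> (\<And>x. 0 \<le> f x) \<Longrightarrow> sum f (A \<union> B) \<le> sum f A + (sum f B :: real)"
  using sum_Un[of A B f] sum_nonneg[of "A \<inter> B" f] by simp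

lemma sum_UN_le':
  assumes "finite M" "\<And>K. K \<in> M \<Longrightarrow> finite (R K)" "\<And>x. 0 \<le> f x"
  shows "sum f (\<Union>K\<in>M. R K) \<le> (\<Sum>K\<in>M. sum f (R K) :: real)"
  using assms
proof (induction M rule: finite_induct)
  case empty then show ?case by simp
next
  case (insert x F)
  have "sum f (\<Union>K\<in>insert x F. R K) = sum f (R x \<union> (\<Union>K\<in>F. R K))" by simp
  also have "\<dots> \<le> sum f (R x) + sum f (\<Union>K\<in>F. R K)"
    using insert by (intro sum_Un_le') auto
  also have "\<dots> \<le> sum f (R x) + (\<Sum>K\<in>F. sum f (R K))"
    using insert by simp
  finally show ?case using insert by simp
qed

locale refine =
  fixes n :: nat and \<Omega> :: ibox and F :: "ibox \<Rightarrow> real interval" and C g \<rho> :: real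
  assumes n: "0 < n" and hol: "holder_on n \<Omega> F C g" and \<rho>: "0 < \<rho>"
begin

abbreviation "\<eta> \<equiv> eta n F"
abbreviation "R \<equiv> holder_refine n C g \<rho> \<eta>"

lemma Cg: "0 \<le> C" "0 < g" "\<And>K. box_sub n K \<Omega> \<Longrightarrow> width (F K) \<le> C * box_width n K powr g"
  using hol unfolding holder_on_def by auto

lemma refine_all:
  assumes K: "box_sub n K \<Omega>" "ndb n K"
  shows "finite (R K) \<and>
    (\<forall>K'\<in>R K. box_sub n K' K \<and> ndb n K' \<and> obox n K' \<subseteq> obox n K) \<and>
    (\<forall>K1\<in>R K. \<forall>K2\<in>R K. K1 \<noteq> K2 \<longrightarrow> obox n K1 \<inter> obox n K2 = {}) \<and>
    box_pts n K \<subseteq> (\<Union>K'\<in>R K. box_pts n K') \<and>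
    sum \<eta> (R K) \<le> \<rho> * \<eta> K"
proof (cases "\<eta> K = 0")
    case True
    then have "R K = {K}" by (simp add: holder_refine_def)
    then show ?thesis using True K by auto
  next
    case False
    have eK: "0 < \<eta> K" using False eta_nonneg[of n F K] by linarith
    have vK: "0 < box_vol n K" using vol_pos[OF K(2)] .
    have wF: "0 < width (F K)" using eK vK by (simp add: eta_def zero_less_mult_iff)
    have C0: "0 < C"
    proof (rule ccontr)
      assume "\<not> 0 < C"
      then have "C = 0" using Cg by simp
      then show False using Cg(3)[OF K(1)] wF by simp
    qed
    define A where "A = C * box_vol n K / (\<rho> * \<eta> K)"
    have A0: "0 < A" using C0 vK \<rho> eK by (simp add: A_def)
    define m where "m i = nat \<lceil>width (K i) * A powr (1 / g)\<rceil>" for i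
    have RK: "R K = ch n m K ` PiE {..<n} (\<lambda>i. {..<m i})"
      using False by (simp add: holder_refine_def m_def[abs_def] A_def ch_def Let_def)
    have wK: "0 < width (K i)" if "i < n" for i using K(2) that by (simp add: ndb_def width_def)
    have mge: "width (K i) * A powr (1 / g) \<le> real (m i)" if "i < n" for i
    proof -
      have "width (K i) * A powr (1 / g) \<le> of_int \<lceil>width (K i) * A powr (1 / g)\<rceil>" by (rule le_of_int_ceiling)
      also have "\<dots> = real (m i)" using wK[OF that] A0 by (simp add: m_def)
      finally show ?thesis .
    qed
    have m1: "\<forall>i<n. 1 \<le> m i"
    proof (intro allI impI)
      fix i assume i: "i < n"
      have "0 < width (K i) * A powr (1 / g)" using wK[OF i] A0 by simp
      then have "1 \<le> \<lceil>width (K i) * A powr (1 / g)\<rceil>" by simp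
      then show "1 \<le> m i" by (simp add: m_def le_nat_iff)
    qed
    have ndK: "\<forall>i<n. lower (K i) < upper (K i)" using K(2) by (simp add: ndb_def)
    note chl = ch_sub[OF m1 ndK] ch_obox[OF m1 ndK] ch_disj[OF m1 ndK] ch_cover[OF m1 ndK]
      ch_nd[OF m1 ndK] ch_vol_sum[OF m1 ndK]
    have fin: "finite (R K)" unfolding RK by (intro finite_imageI finite_PiE) auto
    have p2: "\<forall>K'\<in>R K. box_sub n K' K \<and> ndb n K' \<and> obox n K' \<subseteq> obox n K"
    proof
      fix K' assume "K' \<in> R K"
      then obtain t where t: "t \<in> PiE {..<n} (\<lambda>i. {..<m i})" "K' = ch n m K t" unfolding RK by blast
      have "ndb n K'" unfolding ndb_def t(2) using chl(5) by blast
      then show "box_sub n K' K \<and> ndb n K' \<and> obox n K' \<subseteq> obox n K"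
        using chl(1)[OF t(1)] chl(2)[OF t(1)] t(2) by simp
    qed
    have p3: "\<forall>K1\<in>R K. \<forall>K2\<in>R K. K1 \<noteq> K2 \<longrightarrow> obox n K1 \<inter> obox n K2 = {}"
    proof (intro ballI impI)
      fix K1 K2 assume "K1 \<in> R K" "K2 \<in> R K" and ne: "K1 \<noteq> K2"
      then obtain t1 t2 where t: "t1 \<in> PiE {..<n} (\<lambda>i. {..<m i})" "K1 = ch n m K t1"
        "t2 \<in> PiE {..<n} (\<lambda>i. {..<m i})" "K2 = ch n m K t2" unfolding RK by blast
      then have "t1 \<noteq> t2" using ne by blast
      then show "obox n K1 \<inter> obox n K2 = {}" using chl(3)[OF t(1) t(3)] t by simp
    qed
    have p4: "box_pts n K \<subseteq> (\<Union>K'\<in>R K. box_pts n K')"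
      unfolding RK using chl(4) by blast
    have bnd: "\<eta> (ch n m K t) \<le> (\<rho> * \<eta> K / box_vol n K) * box_vol n (ch n m K t)"
      if t: "t \<in> PiE {..<n} (\<lambda>i. {..<m i})" for t
    proof -
      have sub: "box_sub n (ch n m K t) \<Omega>" using box_sub_trans[OF chl(1)[OF t] K(1)] .
      have wi: "width (ch n m K t i) \<le> A powr (- (1 / g))" if i: "i < n" for i
      proof -
        have mpos: "0 < real (m i)" using m1 i by auto
        have "width (ch n m K t i) = width (K i) / real (m i)" using ch_width[OF i] .
        also have "\<dots> \<le> width (K i) / (width (K i) * A powr (1 / g))"
          using mge[OF i] wK[OF i] A0 mpos by (intro divide_left_mono) auto
        also have "\<dots> = A powr (- (1 / g))" using wK[OF i] by (simp add: powr_minus_divide)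
        finally show ?thesis .
      qed
      have bw: "box_width n (ch n m K t) \<le> A powr (- (1 / g))"
        unfolding box_width_def using wi n by (intro Max.boundedI) auto
      have "box_width n (ch n m K t) powr g \<le> (A powr (- (1 / g))) powr g"
        using bw bw_nonneg[OF n] Cg(2) by (intro powr_mono2) auto
      also have "\<dots> = A powr (- (1 / g) * g)" by (rule powr_powr)
      also have "\<dots> = 1 / A" using Cg(2) A0 by (simp add: powr_minus_divide)
      finally have bg: "box_width n (ch n m K t) powr g \<le> 1 / A" .
      have "C * box_width n (ch n m K t) powr g \<le> C * (1 / A)" using bg C0 by (intro mult_left_mono) auto
      also have "C * (1 / A) = \<rho> * \<eta> K / box_vol n K" using C0 vK by (simp add: A_def)
      finally have "width (F (ch n m K t)) \<le> \<rho> * \<eta> K / box_vol n K" using Cg(3)[OF sub] by linarith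
      then show ?thesis unfolding eta_def by (intro mult_right_mono vol_nonneg)
    qed
    have "sum \<eta> (R K) \<le> (\<Sum>t\<in>PiE {..<n} (\<lambda>i. {..<m i}). \<eta> (ch n m K t))"
      unfolding RK by (rule order.trans[OF sum_image_le]) (auto simp: eta_nonneg finite_PiE)
    also have "\<dots> \<le> (\<Sum>t\<in>PiE {..<n} (\<lambda>i. {..<m i}). (\<rho> * \<eta> K / box_vol n K) * box_vol n (ch n m K t))"
      using bnd by (rule sum_mono)
    also have "\<dots> = (\<rho> * \<eta> K / box_vol n K) * box_vol n K"
      by (simp only: sum_distrib_left[symmetric] chl(6))
    also have "\<dots> = \<rho> * \<eta> K" using vK by simp
    finally show ?thesis using fin p2 p3 p4 by blast
qed

lemma step_inv:
  assumes P: "pinv n \<Omega> P" and M: "M \<subseteq> P"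
  shows "pinv n \<Omega> ((P - M) \<union> (\<Union>K\<in>M. R K))"
proof -
  have PP: "finite P" "\<forall>K\<in>P. box_sub n K \<Omega> \<and> ndb n K"
    "\<forall>K\<in>P. \<forall>K'\<in>P. K \<noteq> K' \<longrightarrow> obox n K \<inter> obox n K' = {}"
    "box_pts n \<Omega> \<subseteq> (\<Union>K\<in>P. box_pts n K)" using P by (auto simp: pinv_def)
  have rp: "finite (R K) \<and> (\<forall>K'\<in>R K. box_sub n K' K \<and> ndb n K' \<and> obox n K' \<subseteq> obox n K)
    \<and> (\<forall>K1\<in>R K. \<forall>K2\<in>R K. K1 \<noteq> K2 \<longrightarrow> obox n K1 \<inter> obox n K2 = {})
    \<and> box_pts n K \<subseteq> (\<Union>K'\<in>R K. box_pts n K') \<and> sum \<eta> (R K) \<le> \<rho> * \<eta> K" if KM: "K \<in> M" for K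
  proof -
    have KP: "K \<in> P" using M KM by blast
    have "box_sub n K \<Omega>" "ndb n K" using PP(2) KP by auto
    then show ?thesis by (rule refine_all)
  qed
  have rp1: "finite (R K)" if "K \<in> M" for K using rp[OF that] by (rule conjunct1)
  have rp2: "box_sub n K' K \<and> ndb n K' \<and> obox n K' \<subseteq> obox n K" if "K \<in> M" "K' \<in> R K" for K K'
    using bspec[OF rp[OF that(1), THEN conjunct2, THEN conjunct1] that(2)] .
  have rp3: "obox n K1 \<inter> obox n K2 = {}" if "K \<in> M" "K1 \<in> R K" "K2 \<in> R K" "K1 \<noteq> K2" for K K1 K2
    using rp[OF that(1), THEN conjunct2, THEN conjunct2, THEN conjunct1] that(2-4) by blast
  have rp4: "box_pts n K \<subseteq> (\<Union>K'\<in>R K. box_pts n K')" if "K \<in> M" for K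
    using rp[OF that(1), THEN conjunct2, THEN conjunct2, THEN conjunct2, THEN conjunct1] .
  let ?P = "(P - M) \<union> (\<Union>K\<in>M. R K)"
  have fM: "finite M" using PP(1) M by (rule finite_subset[rotated])
  have fin: "finite ?P"
  proof -
    have "finite (\<Union>K\<in>M. R K)" using fM rp1 by (intro finite_UN_I) auto
    then show ?thesis using PP(1) by simp
  qed
  have orig: "\<exists>A0\<in>P. obox n A \<subseteq> obox n A0 \<and> box_sub n A A0 \<and> ndb n A \<and> (A0 \<in> M \<longrightarrow> A \<in> R A0) \<and> (A0 \<notin> M \<longrightarrow> A = A0)"
    if A: "A \<in> ?P" for A
  proof (cases "A \<in> P - M")
    case True
    then have "A \<in> P" "A \<notin> M" by auto
    then show ?thesis using PP(2) by (intro bexI[of _ A]) auto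
  next
    case False
    then obtain K where K: "K \<in> M" "A \<in> R K" using A by blast
    then have "K \<in> P" using M by blast
    moreover have "obox n A \<subseteq> obox n K \<and> box_sub n A K \<and> ndb n A" using rp2[OF K] by simp
    ultimately show ?thesis using K by (intro bexI[of _ K]) auto
  qed
  have sub: "\<forall>K\<in>?P. box_sub n K \<Omega> \<and> ndb n K"
  proof
    fix A assume "A \<in> ?P"
    from orig[OF this] obtain A0 where A0: "A0 \<in> P" "box_sub n A A0" "ndb n A" by blast
    then have "box_sub n A0 \<Omega>" using PP(2) by blast
    then show "box_sub n A \<Omega> \<and> ndb n A" using box_sub_trans[OF A0(2)] A0(3) by blast
  qed
  have disj: "\<forall>K\<in>?P. \<forall>K'\<in>?P. K \<noteq> K' \<longrightarrow> obox n K \<inter> obox n K' = {}"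
  proof (intro ballI impI)
    fix A B assume A: "A \<in> ?P" and B: "B \<in> ?P" and ne: "A \<noteq> B"
    obtain A0 where A0: "A0 \<in> P" "obox n A \<subseteq> obox n A0" "A0 \<in> M \<Longrightarrow> A \<in> R A0" "A0 \<notin> M \<Longrightarrow> A = A0"
      using orig[OF A] by blast
    obtain B0 where B0: "B0 \<in> P" "obox n B \<subseteq> obox n B0" "B0 \<in> M \<Longrightarrow> B \<in> R B0" "B0 \<notin> M \<Longrightarrow> B = B0"
      using orig[OF B] by blast
    show "obox n A \<inter> obox n B = {}"
    proof (cases "A0 = B0")
      case True
      show ?thesis
      proof (cases "A0 \<in> M")
        case True2: True
        then show ?thesis using rp3[OF True2] A0 B0 True ne by metis
      next
        case False
        then show ?thesis using A0 B0 True ne by blast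
      qed
    next
      case False
      then have "obox n A0 \<inter> obox n B0 = {}" using PP(3) A0 B0 by blast
      then show ?thesis using A0(2) B0(2) by blast
    qed
  qed
  have cov: "box_pts n \<Omega> \<subseteq> (\<Union>K\<in>?P. box_pts n K)"
  proof
    fix x assume "x \<in> box_pts n \<Omega>"
    then obtain K where K: "K \<in> P" "x \<in> box_pts n K" using PP(4) by blast
    show "x \<in> (\<Union>K\<in>?P. box_pts n K)"
    proof (cases "K \<in> M")
      case True
      then obtain K' where "K' \<in> R K" "x \<in> box_pts n K'" using rp4[OF True] K by blast
      then show ?thesis using True by blast
    next
      case False then show ?thesis using K by blast
    qed
  qed
  show ?thesis using fin sub disj cov by (simp add: pinv_def)
qed

lemma step_sum:
  assumes P: "pinv n \<Omega> P" and M: "M \<subseteq> P" and th: "\<theta> * sum \<eta> P \<le> sum \<eta> M" and r1: "\<rho> < 1"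
  shows "sum \<eta> ((P - M) \<union> (\<Union>K\<in>M. R K)) \<le> (1 - \<theta> * (1 - \<rho>)) * sum \<eta> P"
proof -
  have PP: "finite P" "\<forall>K\<in>P. box_sub n K \<Omega> \<and> ndb n K" using P by (auto simp: pinv_def)
  have fM: "finite M" using PP(1) M finite_subset by blast
  have rp: "K \<in> M \<Longrightarrow> finite (R K) \<and> sum \<eta> (R K) \<le> \<rho> * \<eta> K" for K
  proof -
    assume "K \<in> M"
    then have "box_sub n K \<Omega>" "ndb n K" using M PP(2) by auto
    from refine_all[OF this] show ?thesis by blast
  qed
  have "sum \<eta> ((P - M) \<union> (\<Union>K\<in>M. R K)) \<le> sum \<eta> (P - M) + sum \<eta> (\<Union>K\<in>M. R K)"
    using PP(1) fM rp by (intro sum_Un_le' eta_nonneg) auto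
  also have "sum \<eta> (\<Union>K\<in>M. R K) \<le> (\<Sum>K\<in>M. sum \<eta> (R K))"
    using fM rp by (intro sum_UN_le' eta_nonneg) auto
  also have "\<dots> \<le> (\<Sum>K\<in>M. \<rho> * \<eta> K)" using rp by (intro sum_mono) auto
  also have "sum \<eta> (P - M) = sum \<eta> P - sum \<eta> M" using M PP(1) by (simp add: sum_diff)
  also have "(\<Sum>K\<in>M. \<rho> * \<eta> K) = \<rho> * sum \<eta> M" by (simp add: sum_distrib_left)
  finally have "sum \<eta> ((P - M) \<union> (\<Union>K\<in>M. R K)) \<le> sum \<eta> P - (1 - \<rho>) * sum \<eta> M"
    by (simp add: algebra_simps)
  also have "\<dots> \<le> sum \<eta> P - (1 - \<rho>) * (\<theta> * sum \<eta> P)"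
    using th r1 by (intro diff_left_mono mult_left_mono) auto
  finally show ?thesis by (simp add: algebra_simps)
qed

lemma adaquad_steps:
  assumes th: "0 < \<theta>" "\<theta> < 1" and r1: "\<rho> < 1" and nd: "ndb n \<Omega>"
  shows "pinv n \<Omega> (adaquad_part (dorfler \<theta> \<eta>) R \<Omega> k) \<and>
    sum \<eta> (adaquad_part (dorfler \<theta> \<eta>) R \<Omega> (Suc k)) \<le> (1 - \<theta> * (1 - \<rho>)) * sum \<eta> (adaquad_part (dorfler \<theta> \<eta>) R \<Omega> k)"
proof -
  let ?P = "adaquad_part (dorfler \<theta> \<eta>) R \<Omega>"
  have inv: "pinv n \<Omega> (?P k)" for k
  proof (induction k)
    case 0
    show ?case using nd by (simp add: pinv_def)
  next
    case (Suc k)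
    have "dorfler \<theta> \<eta> (?P k) \<subseteq> ?P k"
      using Suc th by (intro dorfler_prop(1)) (auto simp: pinv_def eta_nonneg)
    then show ?case using step_inv[OF Suc] by (simp add: Let_def)
  qed
  have fin: "finite (?P k)" using inv by (simp add: pinv_def)
  have d: "dorfler \<theta> \<eta> (?P k) \<subseteq> ?P k" "\<theta> * sum \<eta> (?P k) \<le> sum \<eta> (dorfler \<theta> \<eta> (?P k))"
    using fin th by (intro dorfler_prop; auto simp: eta_nonneg)+
  have "sum \<eta> (?P (Suc k)) \<le> (1 - \<theta> * (1 - \<rho>)) * sum \<eta> (?P k)"
    using step_sum[OF inv d r1] by (simp add: Let_def)
  then show ?thesis using inv by blast
qed

end


lemma powr_ge_self:
  fixes a r :: real
  assumes "0 \<le> a" "a \<le> 1" "0 < r" "r \<le> 1"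
  shows "a \<le> a powr r"
proof (cases "a = 0")
  case True then show ?thesis by simp
next
  case False
  then have a: "0 < a" using assms by simp
  have "1 \<le> (1 / a) powr (1 - r)" using assms a by (intro ge_one_powr_ge_zero) auto
  also have "(1 / a) powr (1 - r) = a powr (r - 1)"
    using a by (simp add: powr_divide powr_minus_divide[symmetric] powr_minus)
  finally have "a * 1 \<le> a * a powr (r - 1)" using a by (intro mult_left_mono) auto
  also have "a * a powr (r - 1) = a powr r" using a by (simp add: powr_mult_base)
  finally show ?thesis by simp
qed

lemma powr_subadd:
  fixes x y r :: real
  assumes "0 \<le> x" "0 \<le> y" "0 < r" "r \<le> 1"
  shows "(x + y) powr r \<le> x powr r + y powr r"
proof (cases "x + y = 0")
  case True then show ?thesis using assms by simp
next
  case False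
  define t where "t = x + y"
  have t: "0 < t" using False assms by (simp add: t_def)
  have "x / t \<le> (x / t) powr r" "y / t \<le> (y / t) powr r"
    using assms t by (intro powr_ge_self; simp add: t_def divide_le_eq)+
  moreover have "x / t + y / t = 1" using t by (simp add: t_def add_divide_distrib[symmetric])
  ultimately have "1 \<le> (x / t) powr r + (y / t) powr r" by linarith
  then have "t powr r * 1 \<le> t powr r * ((x / t) powr r + (y / t) powr r)" by (intro mult_left_mono) auto
  also have "\<dots> = x powr r + y powr r"
    using t assms by (simp add: distrib_left powr_divide)
  finally show ?thesis by (simp add: t_def)
qed

lemma powr_diff_le:
  fixes a b r :: real
  assumes "0 \<le> a" "0 \<le> b" "0 < r" "r \<le> 1"
  shows "\<bar>a powr r - b powr r\<bar> \<le> \<bar>a - b\<bar> powr r"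
proof -
  have key: "u powr r - v powr r \<le> (u - v) powr r" if "0 \<le> v" "v \<le> u" for u v :: real
    using powr_subadd[of "u - v" v r] assms that by simp
  show ?thesis
  proof (cases "b \<le> a")
    case True
    have "b powr r \<le> a powr r" using True assms by (intro powr_mono2) auto
    then show ?thesis using key[OF assms(2) True] True by simp
  next
    case False
    have "a powr r \<le> b powr r" using False assms by (intro powr_mono2) auto
    then show ?thesis using key[OF assms(1)] False by (simp add: abs_minus_commute)
  qed
qed

lemma sum_list_wmult: "(\<Sum>(w, x)\<leftarrow>xs. w * c) = (\<Sum>(w, x)\<leftarrow>xs. w) * (c::real)"
  by (induction xs) (auto simp: algebra_simps)

lemma quad_bounds:
  assumes Q: "is_quad_rule n \<Omega> Q" and K: "box_sub n K \<Omega>"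
    and f: "\<And>x. x \<in> box_pts n K \<Longrightarrow> f x \<in> set_of X"
  shows "lower X * box_vol n K \<le> quad Q f K" "quad Q f K \<le> upper X * box_vol n K"
proof -
  have q: "\<forall>(w, x)\<in>set (Q K). 0 < w \<and> x \<in> box_pts n K" "(\<Sum>(w, x)\<leftarrow>Q K. w) = box_vol n K"
    using Q K unfolding is_quad_rule_def by blast+
  have "(\<Sum>(w, x)\<leftarrow>Q K. w * lower X) \<le> (\<Sum>(w, x)\<leftarrow>Q K. w * f x)"
    using q(1) f by (intro sum_list_mono) (auto simp: set_of_eq intro!: mult_left_mono)
  then show "lower X * box_vol n K \<le> quad Q f K"
    unfolding quad_def sum_list_wmult q(2) by (simp add: mult.commute)
  have "(\<Sum>(w, x)\<leftarrow>Q K. w * f x) \<le> (\<Sum>(w, x)\<leftarrow>Q K. w * upper X)"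
    using q(1) f by (intro sum_list_mono) (auto simp: set_of_eq intro!: mult_left_mono)
  then show "quad Q f K \<le> upper X * box_vol n K"
    unfolding quad_def sum_list_wmult q(2) by (simp add: mult.commute)
qed

locale intg =
  fixes n :: nat assumes n: "0 < n"
begin

abbreviation "\<mu> \<equiv> lebesgue_n n"

lemma space_mu: "space \<mu> = PiE {..<n} (\<lambda>_. UNIV)"
  by (simp add: lebesgue_n_def space_PiM)

lemma coord_meas: "(\<lambda>x. x j) \<in> borel_measurable \<mu>"
proof (cases "j < n")
  case True
  have "(\<lambda>x. x j) \<in> measurable \<mu> lborel"
    unfolding lebesgue_n_def by (rule measurable_component_singleton) (use True in auto)
  then show ?thesis using measurable_cong_sets[OF refl sets_lborel] by simp
next
  case False
  have "x j = undefined" if "x \<in> space \<mu>" for x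
    using that False PiE_arb[of x "{..<n}" "\<lambda>_. UNIV" j] by (simp add: space_mu)
  then show ?thesis using measurable_cong[of \<mu> "\<lambda>x. x j" "\<lambda>x. undefined"] by simp
qed

lemma id_meas: "(\<lambda>x. x) \<in> borel_measurable \<mu>"
  by (rule measurable_coordinatewise_then_product) (rule coord_meas)

lemma cont_meas: "continuous_on UNIV g \<Longrightarrow> (g :: (nat \<Rightarrow> real) \<Rightarrow> real) \<in> borel_measurable \<mu>"
  using measurable_compose[OF id_meas borel_measurable_continuous_onI] by simp

definition bx :: "ibox \<Rightarrow> (nat \<Rightarrow> real) set" where
  "bx K = PiE {..<n} (\<lambda>j. set_of (K j))"

lemma bx_sets: "bx K \<in> sets \<mu>"
  unfolding bx_def lebesgue_n_def by (intro sets_PiM_I_finite) (auto simp: set_of_eq)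

lemma bx_eq: "x \<in> space \<mu> \<Longrightarrow> x \<in> box_pts n K \<longleftrightarrow> x \<in> bx K"
  unfolding space_mu bx_def box_pts_def PiE_iff by auto

lemma bx_emeasure: "emeasure \<mu> (bx K) = ennreal (box_vol n K)"
proof -
  interpret product_sigma_finite "\<lambda>_::nat. lborel" by standard
  have "emeasure \<mu> (bx K) = (\<Prod>j<n. emeasure lborel (set_of (K j)))"
    unfolding lebesgue_n_def bx_def by (rule emeasure_PiM) (auto simp: set_of_eq)
  also have "\<dots> = (\<Prod>j<n. ennreal (width (K j)))" by (simp add: set_of_eq width_def)
  also have "\<dots> = ennreal (box_vol n K)" by (simp add: box_vol_def prod_ennreal)
  finally show ?thesis .
qed

lemma bx_measure: "measure \<mu> (bx K) = box_vol n K"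
  using bx_emeasure vol_nonneg by (simp add: measure_def)

lemma ind_eq: "x \<in> space \<mu> \<Longrightarrow> indicator (box_pts n K) x * g x = indicator (bx K) x * (g x :: real)"
  using bx_eq by (simp add: indicator_def)

lemma ind_meas: "g \<in> borel_measurable \<mu> \<Longrightarrow> (\<lambda>x. indicator (box_pts n K) x * g x :: real) \<in> borel_measurable \<mu>"
proof -
  assume g: "g \<in> borel_measurable \<mu>"
  have "(\<lambda>x. indicator (bx K) x * g x :: real) \<in> borel_measurable \<mu>"
    using g bx_sets by (intro borel_measurable_times borel_measurable_indicator)
  then show ?thesis using measurable_cong[of \<mu> "\<lambda>x. indicator (box_pts n K) x * g x" "\<lambda>x. indicator (bx K) x * g x"] ind_eq
    by simp
qed

lemma integrable_box:
  assumes g: "g \<in> borel_measurable \<mu>" and bnd: "\<And>x. x \<in> box_pts n K \<Longrightarrow> \<bar>g x\<bar> \<le> (B::real)"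
  shows "integrable \<mu> (\<lambda>x. indicator (box_pts n K) x * g x)"
proof -
  have "integrable \<mu> (\<lambda>x. indicator (bx K) x * g x)"
  proof (rule Bochner_Integration.integrable_bound[where f="\<lambda>x. indicator (bx K) x * B"])
    show "integrable \<mu> (\<lambda>x. indicator (bx K) x * B)"
      using bx_sets bx_emeasure by (intro integrable_mult_left integrable_real_indicator) auto
    show "(\<lambda>x. indicator (bx K) x * g x) \<in> borel_measurable \<mu>"
      using g bx_sets by (intro borel_measurable_times borel_measurable_indicator)
    show "AE x in \<mu>. norm (indicator (bx K) x * g x) \<le> norm (indicator (bx K) x * B)"
    proof (rule AE_I2)
      fix x assume x: "x \<in> space \<mu>"
      show "norm (indicator (bx K) x * g x) \<le> norm (indicator (bx K) x * B)"
      proof (cases "x \<in> bx K")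
        case True
        then have "\<bar>g x\<bar> \<le> B" using bnd bx_eq[OF x] by blast
        then show ?thesis using True by simp
      qed simp
    qed
  qed
  moreover have e: "\<And>x. x \<in> space \<mu> \<Longrightarrow> indicator (box_pts n K) x * g x = indicator (bx K) x * g x"
    by (rule ind_eq)
  have "integrable \<mu> (\<lambda>x. indicator (box_pts n K) x * g x) \<longleftrightarrow> integrable \<mu> (\<lambda>x. indicator (bx K) x * g x)"
    by (rule Bochner_Integration.integrable_cong[OF refl e])
  ultimately show ?thesis by simp
qed

lemma integral_box_bounds:
  assumes g: "g \<in> borel_measurable \<mu>" and bnd: "\<And>x. x \<in> box_pts n K \<Longrightarrow> lo \<le> g x \<and> g x \<le> hi"
  shows "lo * box_vol n K \<le> integral\<^sup>L \<mu> (\<lambda>x. indicator (box_pts n K) x * g x)"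
    "integral\<^sup>L \<mu> (\<lambda>x. indicator (box_pts n K) x * g x) \<le> hi * box_vol n K"
proof -
  have B: "\<bar>g x\<bar> \<le> \<bar>lo\<bar> + \<bar>hi\<bar>" if "x \<in> box_pts n K" for x using bnd[OF that] by linarith
  have int: "integrable \<mu> (\<lambda>x. indicator (box_pts n K) x * g x)" by (rule integrable_box[OF g B])
  have ic: "integrable \<mu> (\<lambda>x. indicator (bx K) x * c)" for c :: real
    using bx_sets bx_emeasure by (intro integrable_mult_left integrable_real_indicator) auto
  have meas: "measure \<mu> (bx K \<inter> space \<mu>) = box_vol n K"
  proof -
    have "bx K \<inter> space \<mu> = bx K" using bx_sets sets.sets_into_space by blast
    then show ?thesis by (simp add: bx_measure)
  qed
  have "integral\<^sup>L \<mu> (\<lambda>x. indicator (bx K) x * lo) \<le> integral\<^sup>L \<mu> (\<lambda>x. indicator (box_pts n K) x * g x)"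
  proof (rule Bochner_Integration.integral_mono[OF ic int])
    fix x assume x: "x \<in> space \<mu>"
    show "indicator (bx K) x * lo \<le> indicator (box_pts n K) x * g x"
      using bnd bx_eq[OF x] by (cases "x \<in> bx K") auto
  qed
  then show "lo * box_vol n K \<le> integral\<^sup>L \<mu> (\<lambda>x. indicator (box_pts n K) x * g x)" by (simp add: meas mult.commute)
  have "integral\<^sup>L \<mu> (\<lambda>x. indicator (box_pts n K) x * g x) \<le> integral\<^sup>L \<mu> (\<lambda>x. indicator (bx K) x * hi)"
  proof (rule Bochner_Integration.integral_mono[OF int ic])
    fix x assume x: "x \<in> space \<mu>"
    show "indicator (box_pts n K) x * g x \<le> indicator (bx K) x * hi"
      using bnd bx_eq[OF x] by (cases "x \<in> bx K") auto
  qed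
  then show "integral\<^sup>L \<mu> (\<lambda>x. indicator (box_pts n K) x * g x) \<le> hi * box_vol n K" by (simp add: meas mult.commute)
qed

lemma hyper_null: "j < n \<Longrightarrow> AE x in \<mu>. x j \<noteq> c"
proof -
  assume True: "j < n"
  interpret product_sigma_finite "\<lambda>_::nat. lborel" by standard
  define N where "N = PiE {..<n} (\<lambda>i. if i = j then {c} else UNIV)"
  have Ns: "N \<in> sets \<mu>" unfolding N_def lebesgue_n_def by (intro sets_PiM_I_finite) auto
  have "emeasure \<mu> N = (\<Prod>i<n. emeasure lborel (if i = j then {c} else UNIV))"
    unfolding lebesgue_n_def N_def by (rule emeasure_PiM) auto
  also have "\<dots> = 0" using True by (intro prod_zero) auto
  finally have "N \<in> null_sets \<mu>" using Ns by blast
  moreover have "{x \<in> space \<mu>. \<not> x j \<noteq> c} \<subseteq> N" unfolding N_def space_mu PiE_iff extensional_def by auto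
  ultimately show ?thesis by (rule AE_I')
qed

lemma box_pts_mono: "box_sub n K \<Omega> \<Longrightarrow> box_pts n K \<subseteq> box_pts n \<Omega>"
  by (auto simp: box_sub_def box_pts_def)

lemma partition_integral:
  assumes P: "pinv n \<Omega> P" and g: "g \<in> borel_measurable \<mu>"
    and bnd: "\<And>x. x \<in> box_pts n \<Omega> \<Longrightarrow> \<bar>g x\<bar> \<le> (B::real)"
  shows "integral\<^sup>L \<mu> (\<lambda>x. indicator (box_pts n \<Omega>) x * g x)
       = (\<Sum>K\<in>P. integral\<^sup>L \<mu> (\<lambda>x. indicator (box_pts n K) x * g x))"
proof -
  have PP: "finite P" "\<forall>K\<in>P. box_sub n K \<Omega> \<and> ndb n K"
    "\<forall>K\<in>P. \<forall>K'\<in>P. K \<noteq> K' \<longrightarrow> obox n K \<inter> obox n K' = {}"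
    "box_pts n \<Omega> \<subseteq> (\<Union>K\<in>P. box_pts n K)" using P by (auto simp: pinv_def)
  have AE: "AE x in \<mu>. \<forall>K\<in>P. \<forall>j\<in>{..<n}. x j \<noteq> lower (K j) \<and> x j \<noteq> upper (K j)"
  proof (intro AE_finite_allI PP(1) finite_lessThan)
    fix K j assume "j \<in> {..<n}"
    then have j: "j < n" by simp
    show "AE x in \<mu>. x j \<noteq> lower (K j) \<and> x j \<noteq> upper (K j)"
      using hyper_null[OF j, of "lower (K j)"] hyper_null[OF j, of "upper (K j)"] by eventually_elim auto
  qed
  have pw: "indicator (box_pts n \<Omega>) x * g x = (\<Sum>K\<in>P. indicator (box_pts n K) x * g x)"
    if x: "\<forall>K\<in>P. \<forall>j\<in>{..<n}. x j \<noteq> lower (K j) \<and> x j \<noteq> upper (K j)" for x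
  proof (cases "x \<in> box_pts n \<Omega>")
    case True
    then obtain K0 where K0: "K0 \<in> P" "x \<in> box_pts n K0" using PP(4) by blast
    have ob: "x \<in> obox n K" if K: "K \<in> P" "x \<in> box_pts n K" for K
    proof -
      have "lower (K j) < x j \<and> x j < upper (K j)" if j: "j < n" for j
      proof -
        have "x j \<in> set_of (K j)" using K(2) j by (simp add: box_pts_def)
        moreover have "x j \<noteq> lower (K j) \<and> x j \<noteq> upper (K j)" using x K(1) j by blast
        ultimately show ?thesis by (auto simp: set_of_eq)
      qed
      then show ?thesis by (simp add: obox_def)
    qed
    have "indicator (box_pts n K) x * g x = (if K = K0 then g x else 0)" if K: "K \<in> P" for K
    proof (cases "K = K0")
      case True then show ?thesis using K0 by simp
    next
      case False
      have "x \<notin> box_pts n K"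
      proof
        assume "x \<in> box_pts n K"
        then have "x \<in> obox n K \<inter> obox n K0" using ob K K0 by blast
        then show False using PP(3) K K0(1) False by blast
      qed
      then show ?thesis using False by simp
    qed
    then have "(\<Sum>K\<in>P. indicator (box_pts n K) x * g x) = (\<Sum>K\<in>P. if K = K0 then g x else 0)"
      by (intro sum.cong) auto
    also have "\<dots> = g x" using K0(1) PP(1) by simp
    finally show ?thesis using True by simp
  next
    case False
    have "x \<notin> box_pts n K" if "K \<in> P" for K using False box_pts_mono PP(2) that by blast
    then show ?thesis using False by simp
  qed
  have eq: "AE x in \<mu>. indicator (box_pts n \<Omega>) x * g x = (\<Sum>K\<in>P. indicator (box_pts n K) x * g x)"
    using AE by eventually_elim (rule pw)
  have int: "integrable \<mu> (\<lambda>x. indicator (box_pts n K) x * g x)" if "K \<in> P" for K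
    using PP(2) that bnd box_pts_mono by (intro integrable_box[OF g, of K B]) blast
  have "integral\<^sup>L \<mu> (\<lambda>x. indicator (box_pts n \<Omega>) x * g x)
      = integral\<^sup>L \<mu> (\<lambda>x. \<Sum>K\<in>P. indicator (box_pts n K) x * g x)"
    using eq ind_meas[OF g] by (intro integral_cong_AE borel_measurable_sum) auto
  also have "\<dots> = (\<Sum>K\<in>P. integral\<^sup>L \<mu> (\<lambda>x. indicator (box_pts n K) x * g x))"
    using int by (rule Bochner_Integration.integral_sum)
  finally show ?thesis .
qed

lemma quad_error:
  assumes P: "pinv n \<Omega> P" and Q: "is_quad_rule n \<Omega> Q" and g: "g \<in> borel_measurable \<mu>"
    and bnd: "\<And>x. x \<in> box_pts n \<Omega> \<Longrightarrow> \<bar>g x\<bar> \<le> (B::real)"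
    and encl: "\<And>K x. box_sub n K \<Omega> \<Longrightarrow> x \<in> box_pts n K \<Longrightarrow> g x \<in> set_of (F K)"
  shows "\<bar>integral\<^sup>L \<mu> (\<lambda>x. indicator (box_pts n \<Omega>) x * g x) - (\<Sum>K\<in>P. quad Q g K)\<bar>
     \<le> (\<Sum>K\<in>P. eta n F K)"
proof -
  have PP: "\<forall>K\<in>P. box_sub n K \<Omega>" using P by (auto simp: pinv_def)
  have each: "\<bar>integral\<^sup>L \<mu> (\<lambda>x. indicator (box_pts n K) x * g x) - quad Q g K\<bar> \<le> eta n F K"
    if K: "K \<in> P" for K
  proof -
    have Ks: "box_sub n K \<Omega>" using PP K by blast
    have b: "\<And>x. x \<in> box_pts n K \<Longrightarrow> lower (F K) \<le> g x \<and> g x \<le> upper (F K)"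
      using encl[OF Ks] by (auto simp: set_of_eq)
    note i = integral_box_bounds[where K=K and lo="lower (F K)" and hi="upper (F K)", OF g b]
    note q = quad_bounds[where K=K and f=g and X="F K", OF Q Ks encl[OF Ks]]
    show ?thesis using i q by (simp add: eta_def width_def abs_le_iff algebra_simps)
  qed
  have "\<bar>integral\<^sup>L \<mu> (\<lambda>x. indicator (box_pts n \<Omega>) x * g x) - (\<Sum>K\<in>P. quad Q g K)\<bar>
     = \<bar>\<Sum>K\<in>P. integral\<^sup>L \<mu> (\<lambda>x. indicator (box_pts n K) x * g x) - quad Q g K\<bar>"
    using partition_integral[OF P g bnd] by (simp add: sum_subtractf)
  also have "\<dots> \<le> (\<Sum>K\<in>P. \<bar>integral\<^sup>L \<mu> (\<lambda>x. indicator (box_pts n K) x * g x) - quad Q g K\<bar>)"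
    by (rule sum_abs)
  also have "\<dots> \<le> (\<Sum>K\<in>P. eta n F K)" using each by (rule sum_mono)
  finally show ?thesis .
qed

end


context nnet_all
begin

lemma fex_nonneg: "0 \<le> fex p x"
proof -
  have "0 \<le> (case jl of (j, l) \<Rightarrow> \<bar>ddZ j l L x i\<bar> powr p)" for jl i by (cases jl) simp
  then show ?thesis unfolding fex_def by (intro sum_nonneg add_nonneg_nonneg) auto
qed

lemma fex_bound:
  assumes "1 \<le> p" "x \<in> box_pts (d 0) \<Omega>"
  shows "\<bar>fex p x\<bar> \<le> mag (F_enc S S1 S2 d W b L p \<Omega>)"
  using mag_ge[OF fex_encl[OF assms(2,1)]] .

lemma Dalpha_cont:
  assumes "\<alpha> \<in> multiidx (d 0) 2" "0 < p"
  shows "continuous_on UNIV (\<lambda>x. \<bar>Dalpha (d 0) \<alpha> (\<lambda>u. nn s d W b L u i) x\<bar> powr p)"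
proof -
  have nnz: "(\<lambda>u. nn s d W b L u i) = (\<lambda>u. nn_z s d W b L u i)" by (simp add: nn_def)
  have "\<alpha> = (\<lambda>_. 0) \<or> \<alpha> \<in> ee ` {..<d 0} \<or> \<alpha> \<in> ee2 ` Tset (d 0)"
    using assms(1) unfolding multiidx2 by blast
  then consider "\<alpha> = (\<lambda>_. 0)" | j where "j < d 0" "\<alpha> = ee j"
    | j l where "j \<le> l" "l < d 0" "\<alpha> = ee2 (j, l)"
  proof (elim disjE)
    assume "\<alpha> \<in> ee2 ` Tset (d 0)"
    then obtain jl where jl: "jl \<in> Tset (d 0)" "\<alpha> = ee2 jl" by (rule imageE) simp
    obtain j l where "jl = (j, l)" by (cases jl)
    then show ?thesis using jl that(3)[of j l] by (simp add: Tset_def)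
  qed auto
  then show ?thesis
  proof cases
    case 1 then show ?thesis using assms(2) by (simp add: Dalpha_zero nnz cont_abs_powr CZ)
  next
    case 2 then show ?thesis using assms(2) by (simp add: Dalpha_e nnz P1 cont_abs_powr CdZ)
  next
    case 3 then show ?thesis using assms(2) by (simp add: Dalpha_ee nnz P1 P2 cont_abs_powr CddZ)
  qed
qed

lemma fin_multiidx: "finite (multiidx n 2)"
proof -
  have "finite (ee2 ` Tset n)"
    by (rule finite_imageI, rule finite_subset[of _ "{..<n} \<times> {..<n}"]) (auto simp: Tset_def)
  then show ?thesis unfolding multiidx2 by simp
qed

lemma sobolev_eq:
  assumes p: "1 \<le> p"
  shows "sobolev_norm (d 0) 2 p (d (L + 1)) \<Omega> (nn s d W b L)
    = (integral\<^sup>L (lebesgue_n (d 0)) (\<lambda>x. indicator (box_pts (d 0) \<Omega>) x * fex p x)) powr (1 / p)"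
proof -
  interpret intg "d 0" using d0 by unfold_locales
  define h where "h i \<alpha> x = \<bar>Dalpha (d 0) \<alpha> (\<lambda>u. nn s d W b L u i) x\<bar> powr p" for i \<alpha> x
  have fh: "fex p x = (\<Sum>i<d (L + 1). \<Sum>\<alpha>\<in>multiidx (d 0) 2. h i \<alpha> x)" for x
    using fun_cong[OF f_sob_eq[of p], of x] unfolding f_sob_def h_def by simp
  have hb: "\<bar>h i \<alpha> x\<bar> \<le> mag (F_enc S S1 S2 d W b L p \<Omega>)"
    if "i < d (L + 1)" "\<alpha> \<in> multiidx (d 0) 2" "x \<in> box_pts (d 0) \<Omega>" for i \<alpha> x
  proof -
    have "h i \<alpha> x \<le> (\<Sum>\<alpha>\<in>multiidx (d 0) 2. h i \<alpha> x)"
      using that fin_multiidx by (intro member_le_sum) (auto simp: h_def)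
    also have "\<dots> \<le> (\<Sum>i<d (L + 1). \<Sum>\<alpha>\<in>multiidx (d 0) 2. h i \<alpha> x)"
      using that fin_multiidx by (intro member_le_sum[where f="\<lambda>i. \<Sum>\<alpha>\<in>multiidx (d 0) 2. h i \<alpha> x"])
        (auto simp: h_def intro!: sum_nonneg)
    also have "\<dots> \<le> mag (F_enc S S1 S2 d W b L p \<Omega>)" using fex_bound[OF p that(3)] fh by simp
    finally show ?thesis by (simp add: h_def)
  qed
  have hm: "h i \<alpha> \<in> borel_measurable \<mu>" if "\<alpha> \<in> multiidx (d 0) 2" for i \<alpha>
    unfolding h_def[abs_def] using Dalpha_cont[OF that] p by (intro cont_meas) auto
  have hi: "integrable \<mu> (\<lambda>x. indicator (box_pts (d 0) \<Omega>) x * h i \<alpha> x)"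
    if "i < d (L + 1)" "\<alpha> \<in> multiidx (d 0) 2" for i \<alpha>
    using hb[OF that] by (intro integrable_box[OF hm[OF that(2)]]) auto
  have "(\<Sum>i<d (L + 1). \<Sum>\<alpha>\<in>multiidx (d 0) 2. integral\<^sup>L \<mu> (\<lambda>x. indicator (box_pts (d 0) \<Omega>) x * h i \<alpha> x))
     = (\<Sum>i<d (L + 1). integral\<^sup>L \<mu> (\<lambda>x. \<Sum>\<alpha>\<in>multiidx (d 0) 2. indicator (box_pts (d 0) \<Omega>) x * h i \<alpha> x))"
    using hi by (intro sum.cong refl Bochner_Integration.integral_sum[symmetric]) auto
  also have "\<dots> = integral\<^sup>L \<mu> (\<lambda>x. \<Sum>i<d (L + 1). \<Sum>\<alpha>\<in>multiidx (d 0) 2. indicator (box_pts (d 0) \<Omega>) x * h i \<alpha> x)"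
    using hi by (intro Bochner_Integration.integral_sum[symmetric] Bochner_Integration.integrable_sum) auto
  also have "\<dots> = integral\<^sup>L \<mu> (\<lambda>x. indicator (box_pts (d 0) \<Omega>) x * fex p x)"
    by (simp add: fh sum_distrib_left)
  finally have I: "(\<Sum>i<d (L + 1). \<Sum>\<alpha>\<in>multiidx (d 0) 2. integral\<^sup>L \<mu> (\<lambda>x. indicator (box_pts (d 0) \<Omega>) x * h i \<alpha> x))
     = integral\<^sup>L \<mu> (\<lambda>x. indicator (box_pts (d 0) \<Omega>) x * fex p x)" .
  have sn: "sobolev_norm (d 0) 2 p (d (L + 1)) \<Omega> (nn s d W b L) =
     (\<Sum>i<d (L + 1). \<Sum>\<alpha>\<in>multiidx (d 0) 2. integral\<^sup>L \<mu> (\<lambda>x. indicator (box_pts (d 0) \<Omega>) x * h i \<alpha> x)) powr (1 / p)"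
    unfolding sobolev_norm_def h_def by (rule refl)
  show ?thesis unfolding sn I by (rule refl)
qed

end


theorem corollary4p19:
  fixes s s1 s2 :: "real \<Rightarrow> real"
    and S S1 S2 :: "real interval \<Rightarrow> real interval"
    and L :: nat and d :: "nat \<Rightarrow> nat"
    and W :: "nat \<Rightarrow> nat \<Rightarrow> nat \<Rightarrow> real" and b :: "nat \<Rightarrow> nat \<Rightarrow> real"
    and p \<theta> \<rho> :: real
    and \<Omega> :: "nat \<Rightarrow> real interval"
    and Q :: "(nat \<Rightarrow> real interval) \<Rightarrow> (real \<times> (nat \<Rightarrow> real)) list"
  assumes "1 \<le> p" and "0 < \<theta>" and "\<theta> < 1" and "0 < \<rho>" and "\<rho> < 1"
    and "\<forall>k\<le>L + 1. 0 < d k"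
    and "\<forall>j<d 0. lower (\<Omega> j) < upper (\<Omega> j)"
    and "\<forall>x. (s has_real_derivative s1 x) (at x)"
    and "\<forall>x. (s1 has_real_derivative s2 x) (at x)"
    and "ienclosure_R S s" and "ienclosure_R S1 s1" and "ienclosure_R S2 s2"
    and "holder_R S" and "holder_R S1" and "holder_R S2"
    and "is_quad_rule (d 0) \<Omega> Q"
  shows
    "continuous_on UNIV (f_sob (d 0) 2 p (d (L + 1)) (nn s d W b L))
     \<and> enclosure_on (d 0) \<Omega> (f_sob (d 0) 2 p (d (L + 1)) (nn s d W b L)) (F_enc S S1 S2 d W b L p)
     \<and> (\<exists>C g. holder_on (d 0) \<Omega> (F_enc S S1 S2 d W b L p) C g)
     \<and> (\<forall>C g. holder_on (d 0) \<Omega> (F_enc S S1 S2 d W b L p) C g \<longrightarrow>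
          (let F = F_enc S S1 S2 d W b L p;
               f = f_sob (d 0) 2 p (d (L + 1)) (nn s d W b L);
               \<eta> = eta (d 0) F;
               P = adaquad_part (dorfler \<theta> \<eta>) (holder_refine (d 0) C g \<rho> \<eta>) \<Omega>
           in \<forall>n. \<bar>sobolev_norm (d 0) 2 p (d (L + 1)) \<Omega> (nn s d W b L)
                    - (\<Sum>K\<in>P n. quad Q f K) powr (1 / p)\<bar> \<le> (\<Sum>K\<in>P n. \<eta> K) powr (1 / p)
                 \<and> (\<Sum>K\<in>P (Suc n). \<eta> K) \<le> (1 - \<theta> * (1 - \<rho>)) * (\<Sum>K\<in>P n. \<eta> K)))"
proof -
  note a = assms
  have d0: "0 < d 0" using a(6) by auto
  have p: "1 \<le> p" by (rule a(1))
  interpret N: nnet_all s s1 s2 d W b L S S1 S2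
    using a d0 by unfold_locales auto
  let ?F = "F_enc S S1 S2 d W b L p"
  let ?f = "f_sob (d 0) 2 p (d (L + 1)) (nn s d W b L)"
  have feq: "?f = N.fex p" by (rule N.f_sob_eq)
  have good: "good (d 0) \<Omega> ?F" using N.F_good[OF p] .
  have c1: "continuous_on UNIV ?f" unfolding feq by (rule N.cont_fex[OF p])
  have c2: "enclosure_on (d 0) \<Omega> ?f ?F"
  proof -
    have "?f ` box_pts (d 0) K \<subseteq> set_of (?F K)" if "box_sub (d 0) K \<Omega>" for K
      unfolding feq using N.fex_encl[OF _ p] by blast
    then show ?thesis using good unfolding enclosure_on_def good_def by blast
  qed
  have c3: "\<exists>C g. holder_on (d 0) \<Omega> ?F C g"
    using good unfolding good_def holder_on_def by blast
  have c4: "\<forall>C g. holder_on (d 0) \<Omega> ?F C g \<longrightarrow>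
          (let F = ?F; f = ?f; \<eta> = eta (d 0) F;
               P = adaquad_part (dorfler \<theta> \<eta>) (holder_refine (d 0) C g \<rho> \<eta>) \<Omega>
           in \<forall>n. \<bar>sobolev_norm (d 0) 2 p (d (L + 1)) \<Omega> (nn s d W b L)
                    - (\<Sum>K\<in>P n. quad Q f K) powr (1 / p)\<bar> \<le> (\<Sum>K\<in>P n. \<eta> K) powr (1 / p)
                 \<and> (\<Sum>K\<in>P (Suc n). \<eta> K) \<le> (1 - \<theta> * (1 - \<rho>)) * (\<Sum>K\<in>P n. \<eta> K))"
  proof (intro allI impI)
    fix C g assume hol: "holder_on (d 0) \<Omega> ?F C g"
    interpret R: refine "d 0" \<Omega> ?F C g \<rho> using d0 hol a(4) by unfold_locales
    interpret I: intg "d 0" using d0 by unfold_locales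
    define P where "P = adaquad_part (dorfler \<theta> (eta (d 0) ?F)) (holder_refine (d 0) C g \<rho> (eta (d 0) ?F)) \<Omega>"
    have nd: "ndb (d 0) \<Omega>" using a(7) by (simp add: ndb_def)
    have steps: "pinv (d 0) \<Omega> (P k) \<and> sum (eta (d 0) ?F) (P (Suc k)) \<le> (1 - \<theta> * (1 - \<rho>)) * sum (eta (d 0) ?F) (P k)" for k
      unfolding P_def by (rule R.adaquad_steps[OF a(2) a(3) a(5) nd])
    have meas: "N.fex p \<in> borel_measurable (lebesgue_n (d 0))" by (rule I.cont_meas[OF N.cont_fex[OF p]])
    have err: "\<bar>sobolev_norm (d 0) 2 p (d (L + 1)) \<Omega> (nn s d W b L) - (\<Sum>K\<in>P k. quad Q ?f K) powr (1 / p)\<bar>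
        \<le> (\<Sum>K\<in>P k. eta (d 0) ?F K) powr (1 / p)" for k
    proof -
      define A where "A = integral\<^sup>L (lebesgue_n (d 0)) (\<lambda>x. indicator (box_pts (d 0) \<Omega>) x * N.fex p x)"
      define B where "B = (\<Sum>K\<in>P k. quad Q (N.fex p) K)"
      define E where "E = (\<Sum>K\<in>P k. eta (d 0) ?F K)"
      have inv: "pinv (d 0) \<Omega> (P k)" using steps by blast
      have AB: "\<bar>A - B\<bar> \<le> E"
        unfolding A_def B_def E_def
        using I.quad_error[OF inv a(16) meas, of "mag (?F \<Omega>)" ?F] N.fex_bound[OF p] N.fex_encl[OF _ p] by blast
      have A0: "0 \<le> A" unfolding A_def
        by (intro Bochner_Integration.integral_nonneg mult_nonneg_nonneg N.fex_nonneg) auto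
      have B0: "0 \<le> B"
      proof -
        have "0 \<le> quad Q (N.fex p) K" if K: "K \<in> P k" for K
        proof -
          have Ks: "box_sub (d 0) K \<Omega>" using inv K by (auto simp: pinv_def)
          have "\<forall>(w, x)\<in>set (Q K). 0 < w \<and> x \<in> box_pts (d 0) K" using a(16) Ks unfolding is_quad_rule_def by blast
          then show ?thesis unfolding quad_def
            by (intro sum_list_nonneg) (auto intro!: mult_nonneg_nonneg N.fex_nonneg)
        qed
        then show ?thesis unfolding B_def by (intro sum_nonneg) auto
      qed
      have pp: "0 < 1 / p" "1 / p \<le> 1" using p by auto
      have "\<bar>A powr (1 / p) - B powr (1 / p)\<bar> \<le> \<bar>A - B\<bar> powr (1 / p)"
        by (rule powr_diff_le[OF A0 B0 pp])
      also have "\<dots> \<le> E powr (1 / p)" using AB pp by (intro powr_mono2) auto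
      finally have "\<bar>A powr (1 / p) - B powr (1 / p)\<bar> \<le> E powr (1 / p)" .
      moreover have "sobolev_norm (d 0) 2 p (d (L + 1)) \<Omega> (nn s d W b L) = A powr (1 / p)"
        unfolding A_def by (rule N.sobolev_eq[OF p])
      ultimately show ?thesis unfolding feq B_def E_def by simp
    qed
    show "let F = ?F; f = ?f; \<eta> = eta (d 0) F;
               P = adaquad_part (dorfler \<theta> \<eta>) (holder_refine (d 0) C g \<rho> \<eta>) \<Omega>
           in \<forall>n. \<bar>sobolev_norm (d 0) 2 p (d (L + 1)) \<Omega> (nn s d W b L)
                    - (\<Sum>K\<in>P n. quad Q f K) powr (1 / p)\<bar> \<le> (\<Sum>K\<in>P n. \<eta> K) powr (1 / p)
                 \<and> (\<Sum>K\<in>P (Suc n). \<eta> K) \<le> (1 - \<theta> * (1 - \<rho>)) * (\<Sum>K\<in>P n. \<eta> K)"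
      unfolding Let_def P_def[symmetric] using err steps by blast
  qed
  show ?thesis using c1 c2 c3 c4 by blast
qed


end
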